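(* Let $A\in B_\infty(L)$, let $\{e_j\}_{j\in\mathbb N}$ be a complete orthonormal system in $L$ and $M\in\mathbb N$. Then, in the sense of quadratic forms on $D_1$, \[ \sum_{j=1}^M a^\dagger(Ae_j)a(\bar A\bar e_j)\le\|A\|^2N . \]
   Context: $L$ is a separable complex Hilbert space with $\dim L=\infty$, scalar product antilinear in the first argument, and a conjugation $J: f\mapsto\bar f$ (antilinear involution with $(\bar f,\bar g)=(g,f)$); for bounded $A$, $\bar A:=JAJ$. $B_\infty(L)$ denotes the bounded operators on $L$, $\|A\|$ the operator norm. $\mathcal F$ carries a Fock representation of the CCR over $L$: on a dense invariant domain $D$ there are operators $a(f),a^\dagger(f)$, linear in $f$, with $[a(f),a(g)]=0=[a^\dagger(f),a^\dagger(g)]$, $[a(f),a^\dagger(g)]=(\bar f,g)\mathrm{id}$, $(a(f)\Phi,\Psi)=(\Phi,a^\dagger(\bar f)\Psi)$, a unit vacuum $\Omega$ with $a(f)\Omega=0$, and $\mathcal F$ is the closure of the span of all vectors $a^\dagger(f_n)\cdots a^\dagger(f_1)\Omega$. $\mathcal F^{(n)}$ is the closure of the span of such vectors with exactly $n$ creation operators; $\mathcal F=\bigoplus_n\mathcal F^{(n)}$, $\Phi^{(n)}$ the component in $\mathcal F^{(n)}$. $D_\alpha:=\{\Phi:\sum_n(n+1)^{2\alpha}\|\Phi^{(n)}\|^2<\infty\}$. The operators $a(f),a^\dagger(f)$ extend to $D_{1/2}$ (changing particle number by $\mp1$, with $\|a(f)\Phi\|,\|a^\dagger(f)\Phi\|\le\|f\|(\sum_n(n+1)\|\Phi^{(n)}\|^2)^{1/2}$);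 these extensions are used. $N$ is the number operator on $D_1$, $(N\Phi)^{(n)}=n\Phi^{(n)}$. For operators $S,T$ and a subspace $V$, $S\le T$ on $V$ means $(\Phi,S\Phi)\le(\Phi,T\Phi)$ for all $\Phi\in V$. *)

theory Defs
  imports "HOL-Analysis.Analysis" "HOL-Library.Complex_Order"
begin

text \<open>Complex pre-Hilbert spaces, scalar product antilinear in the first argument.
  The real structure (norm, topology) is that of the real inner product Re of the
  complex one; a Hilbert space is such a type that is additionally complete_space.\<close>

class complex_inner = real_inner +
  fixes cscale :: "complex \<Rightarrow> 'a \<Rightarrow> 'a"
    and cinner :: "'a \<Rightarrow> 'a \<Rightarrow> complex"
  assumes cscale_add_right: "cscale c (x + y) = cscale c x + cscale c y"
    and cscale_add_left: "cscale (c + d) x = cscale c x + cscale d x"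
    and cscale_cscale: "cscale c (cscale d x) = cscale (c * d) x"
    and cscale_one: "cscale 1 x = x"
    and scaleR_cscale: "scaleR r x = cscale (complex_of_real r) x"
    and cinner_cnj: "cinner x y = cnj (cinner y x)"
    and cinner_add_right: "cinner x (y + z) = cinner x y + cinner x z"
    and cinner_cscale_right: "cinner x (cscale c y) = c * cinner x y"
    and inner_cinner: "inner x y = Re (cinner x y)"

definition c_span :: "('a::complex_inner) set \<Rightarrow> 'a set" where
  "c_span S = {x. \<exists>(k::nat) c v. (\<forall>i<k. v i \<in> S) \<and> x = (\<Sum>i<k. cscale (c i) (v i))}"

definition clinear_on :: "('a::complex_inner) set \<Rightarrow> ('a \<Rightarrow> 'b::complex_inner) \<Rightarrow> bool" where
  "clinear_on S T \<longleftrightarrow> (\<forall>x\<in>S. \<forall>y\<in>S. T (x + y) = T x + T y) \<and>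
                       (\<forall>c. \<forall>x\<in>S. T (cscale c x) = cscale c (T x))"

definition bounded_clinear_op :: "('a::complex_inner \<Rightarrow> 'b::complex_inner) \<Rightarrow> bool" where
  "bounded_clinear_op T \<longleftrightarrow> clinear_on UNIV T \<and> (\<exists>K. \<forall>x. norm (T x) \<le> K * norm x)"

definition conjugation :: "('a::complex_inner \<Rightarrow> 'a) \<Rightarrow> bool" where
  "conjugation J \<longleftrightarrow> (\<forall>x y. J (x + y) = J x + J y) \<and> (\<forall>c x. J (cscale c x) = cscale (cnj c) (J x))
     \<and> (\<forall>x. J (J x) = x) \<and> (\<forall>f g. cinner (J f) (J g) = cinner g f)"

definition complete_ons :: "(nat \<Rightarrow> 'a::complex_inner) \<Rightarrow> bool" where
  "complete_ons e \<longleftrightarrow> (\<forall>i j. cinner (e i) (e j) = (if i = j then 1 else 0))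
     \<and> (\<forall>x. (\<forall>j. cinner (e j) x = 0) \<longrightarrow> x = 0)"

primrec fock_vec :: "('l \<Rightarrow> 'f \<Rightarrow> 'f) \<Rightarrow> 'f \<Rightarrow> 'l list \<Rightarrow> 'f" where
  "fock_vec ad vac [] = vac"
| "fock_vec ad vac (f # fs) = ad f (fock_vec ad vac fs)"

definition n_part :: "('l \<Rightarrow> 'f::complex_inner \<Rightarrow> 'f) \<Rightarrow> 'f \<Rightarrow> nat \<Rightarrow> 'f set" where
  "n_part ad vac n = closure (c_span {fock_vec ad vac fs | fs. length fs = n})"

definition fin_dom :: "('l \<Rightarrow> 'f::complex_inner \<Rightarrow> 'f) \<Rightarrow> 'f \<Rightarrow> 'f set" where
  "fin_dom ad vac = c_span (range (fock_vec ad vac))"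

text \<open>The component Phi^(n): orthogonal projection onto F^(n).\<close>
definition comp :: "('l \<Rightarrow> 'f::complex_inner \<Rightarrow> 'f) \<Rightarrow> 'f \<Rightarrow> nat \<Rightarrow> 'f \<Rightarrow> 'f" where
  "comp ad vac n x = (THE p. p \<in> n_part ad vac n \<and> (\<forall>y\<in>n_part ad vac n. cinner y (x - p) = 0))"

definition D_alpha :: "('l \<Rightarrow> 'f::complex_inner \<Rightarrow> 'f) \<Rightarrow> 'f \<Rightarrow> real \<Rightarrow> 'f set" where
  "D_alpha ad vac \<alpha> = {x. summable (\<lambda>n. (real n + 1) powr (2 * \<alpha>) * (norm (comp ad vac n x))\<^sup>2)}"

definition numop :: "('l \<Rightarrow> 'f::complex_inner \<Rightarrow> 'f) \<Rightarrow> 'f \<Rightarrow> 'f \<Rightarrow> 'f" where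
  "numop ad vac x = (\<Sum>n. cscale (of_nat n) (comp ad vac n x))"

text \<open>Fock representation of the CCR over L with conjugation J, where a, ad are the
  extensions of the annihilation / creation operators to D_{1/2}:
  on the finite-particle domain they satisfy the CCR, adjointness and vacuum
  conditions; on each F^(n) they are bounded complex linear (hence are the
  continuous extensions), and on D_{1/2} they act componentwise.\<close>
definition fock_rep :: "('l::complex_inner \<Rightarrow> 'l) \<Rightarrow> ('l \<Rightarrow> 'f::complex_inner \<Rightarrow> 'f)
    \<Rightarrow> ('l \<Rightarrow> 'f \<Rightarrow> 'f) \<Rightarrow> 'f \<Rightarrow> bool" where
  "fock_rep J a ad vac \<longleftrightarrow>
     (let D = fin_dom ad vac in
       norm vac = 1 \<and> (\<forall>f. a f vac = 0)
     \<and> closure D = UNIV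
     \<and> (\<forall>f. clinear_on D (a f) \<and> clinear_on D (ad f))
     \<and> (\<forall>f g x. x \<in> D \<longrightarrow> a (f + g) x = a f x + a g x \<and> ad (f + g) x = ad f x + ad g x)
     \<and> (\<forall>c f x. x \<in> D \<longrightarrow> a (cscale c f) x = cscale c (a f x) \<and> ad (cscale c f) x = cscale c (ad f x))
     \<and> (\<forall>f g x. x \<in> D \<longrightarrow> a f (a g x) = a g (a f x))
     \<and> (\<forall>f g x. x \<in> D \<longrightarrow> ad f (ad g x) = ad g (ad f x))
     \<and> (\<forall>f g x. x \<in> D \<longrightarrow> a f (ad g x) - ad g (a f x) = cscale (cinner (J f) g) x)
     \<and> (\<forall>f x y. x \<in> D \<longrightarrow> y \<in> D \<longrightarrow> cinner (a f x) y = cinner x (ad (J f) y))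
     \<and> (\<forall>f n. clinear_on (n_part ad vac n) (a f) \<and> clinear_on (n_part ad vac n) (ad f)
            \<and> (\<exists>K. \<forall>x\<in>n_part ad vac n. norm (a f x) \<le> K * norm x \<and> norm (ad f x) \<le> K * norm x))
     \<and> (\<forall>f x. x \<in> D_alpha ad vac (1/2) \<longrightarrow>
            (\<lambda>n. a f (comp ad vac n x)) sums (a f x) \<and> (\<lambda>n. ad f (comp ad vac n x)) sums (ad f x)))"

end

theory Submission
  imports Defs
begin


lemma cinner_add_left: "cinner (x + y) z = cinner x z + cinner y z"
  by (metis cinner_add_right cinner_cnj complex_cnj_add)
lemma cinner_cscale_left: "cinner (cscale c x) y = cnj c * cinner x y"
  by (metis cinner_cnj cinner_cscale_right complex_cnj_cnj complex_cnj_mult)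
lemma cinner_zero_right[simp]: "cinner x 0 = 0"
  by (metis add_cancel_right_right add_0 cinner_add_right)
lemma cinner_zero_left[simp]: "cinner 0 x = 0"
  by (metis cinner_cnj cinner_zero_right complex_cnj_zero)
lemma cinner_minus_right: "cinner x (- y) = - cinner x y"
  by (metis add.right_inverse cinner_add_right cinner_zero_right eq_neg_iff_add_eq_0)
lemma cinner_minus_left: "cinner (- x) y = - cinner x y"
  by (metis cinner_cnj cinner_minus_right complex_cnj_minus)
lemma cinner_diff_right: "cinner x (y - z) = cinner x y - cinner x z"
  by (metis diff_conv_add_uminus cinner_add_right cinner_minus_right)
lemma cinner_diff_left: "cinner (x - y) z = cinner x z - cinner y z"
  by (metis diff_conv_add_uminus cinner_add_left cinner_minus_left)
lemma cinner_sum_right: "cinner x (sum f A) = (\<Sum>i\<in>A. cinner x (f i))"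
  by (induction A rule: infinite_finite_induct) (auto simp: cinner_add_right)
lemma cinner_sum_left: "cinner (sum f A) x = (\<Sum>i\<in>A. cinner (f i) x)"
  by (induction A rule: infinite_finite_induct) (auto simp: cinner_add_left)
lemma cscale_zero_left[simp]: "cscale 0 x = 0"
  by (metis add_cancel_right_right add_0 cscale_add_left)
lemma cscale_zero_right[simp]: "cscale c 0 = 0"
  by (metis add_cancel_right_right add_0 cscale_add_right)
lemma cscale_minus_right: "cscale c (- x) = - cscale c x"
  by (metis add.right_inverse cscale_add_right cscale_zero_right eq_neg_iff_add_eq_0)
lemma cscale_diff_right: "cscale c (x - y) = cscale c x - cscale c y"
  by (metis diff_conv_add_uminus cscale_add_right cscale_minus_right)
lemma cscale_minus_left: "cscale (- c) x = - cscale c x"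
  by (metis add.right_inverse cscale_add_left cscale_zero_left eq_neg_iff_add_eq_0)
lemma cscale_sum_right: "cscale c (sum f A) = (\<Sum>i\<in>A. cscale c (f i))"
  by (induction A rule: infinite_finite_induct) (auto simp: cscale_add_right)
lemma cscale_sum_left: "cscale (sum f A) x = (\<Sum>i\<in>A. cscale (f i) x)"
  by (induction A rule: infinite_finite_induct) (auto simp: cscale_add_left)

lemma cinner_self: "cinner x x = complex_of_real ((norm x)\<^sup>2)"
proof -
  have "Im (cinner x x) = Im (cnj (cinner x x))" using cinner_cnj[of x x] by simp
  then have "Im (cinner x x) = 0" by simp
  moreover have "Re (cinner x x) = (norm x)\<^sup>2"
    by (simp add: inner_cinner[symmetric] power2_norm_eq_inner)
  ultimately show ?thesis by (simp add: complex_eq_iff)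
qed

lemma norm_sq_cinner: "(norm x)\<^sup>2 = Re (cinner x x)"
  by (simp add: cinner_self)

lemma norm_cscale: "norm (cscale c x) = cmod c * norm x"
proof -
  have "(norm (cscale c x))\<^sup>2 = Re (cnj c * c * cinner x x)"
    unfolding norm_sq_cinner cinner_cscale_left cinner_cscale_right by (simp only: ac_simps)
  also have "cnj c * c * cinner x x = complex_of_real ((cmod c)\<^sup>2 * (norm x)\<^sup>2)"
    by (simp add: cinner_self mult.commute complex_norm_square[of c, symmetric] of_real_power)
  also have "Re \<dots> = (cmod c * norm x)\<^sup>2"
    by (simp add: power_mult_distrib)
  finally show ?thesis by (simp add: power2_eq_iff_nonneg)
qed

lemma cauchy_schwarz: "cmod (cinner x y) \<le> norm x * norm y"
proof (cases "cinner x y = 0")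
  case True then show ?thesis by simp
next
  case False
  define c where "c = cinner x y / cmod (cinner x y)"
  have cm: "cmod c = 1" using False by (simp add: c_def norm_divide)
  have "cnj c * cinner x y = cinner x y * cnj (cinner x y) / complex_of_real (cmod (cinner x y))"
    unfolding c_def by (simp add: field_simps)
  also have "\<dots> = complex_of_real ((cmod (cinner x y))\<^sup>2) / complex_of_real (cmod (cinner x y))"
    by (metis complex_norm_square)
  also have "\<dots> = complex_of_real (cmod (cinner x y))"
    using False by (simp add: power2_eq_square)
  finally have "cnj c * cinner x y = complex_of_real (cmod (cinner x y))" .
  then have "cmod (cinner x y) = inner (cscale c x) y"
    by (simp add: inner_cinner cinner_cscale_left)
  also have "\<dots> \<le> norm (cscale c x) * norm y" by (rule norm_cauchy_schwarz)
  also have "\<dots> = norm x * norm y" by (simp add: norm_cscale cm)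
  finally show ?thesis .
qed

lemma bounded_linear_cinner_right: "bounded_linear (\<lambda>x. cinner z x)"
proof (rule bounded_linear_intro[where K="norm z"])
  show "cinner z (x + y) = cinner z x + cinner z y" for x y by (rule cinner_add_right)
  show "cinner z (scaleR r x) = scaleR r (cinner z x)" for r x
    by (simp add: scaleR_cscale cinner_cscale_right scaleR_conv_of_real)
  show "norm (cinner z x) \<le> norm x * norm z" for x
    using cauchy_schwarz[of z x] by (simp add: mult.commute)
qed

lemma bounded_linear_cinner_left: "bounded_linear (\<lambda>x. cinner x z)"
proof (rule bounded_linear_intro[where K="norm z"])
  show "cinner (x + y) z = cinner x z + cinner y z" for x y by (rule cinner_add_left)
  show "cinner (scaleR r x) z = scaleR r (cinner x z)" for r x
    by (simp add: scaleR_cscale cinner_cscale_left scaleR_conv_of_real)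
  show "norm (cinner x z) \<le> norm x * norm z" for x
    using cauchy_schwarz[of x z] by simp
qed

lemma bounded_linear_cscale: "bounded_linear (cscale c)"
proof (rule bounded_linear_intro[where K="cmod c"])
  show "cscale c (x + y) = cscale c x + cscale c y" for x y by (rule cscale_add_right)
  show "cscale c (scaleR r x) = scaleR r (cscale c x)" for r x
    by (simp add: scaleR_cscale cscale_cscale mult.commute)
  show "norm (cscale c x) \<le> norm x * cmod c" for x
    by (simp add: norm_cscale mult.commute)
qed

lemmas tendsto_cinner_right = bounded_linear.tendsto[OF bounded_linear_cinner_right]
lemmas tendsto_cinner_left = bounded_linear.tendsto[OF bounded_linear_cinner_left]
lemmas sums_cinner_right = bounded_linear.sums[OF bounded_linear_cinner_right]
lemmas tendsto_cscale = bounded_linear.tendsto[OF bounded_linear_cscale]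
lemmas continuous_on_cscale = bounded_linear.continuous_on[OF bounded_linear_cscale]



definition csub :: "('a::complex_inner) set \<Rightarrow> bool" where
  "csub S \<longleftrightarrow> 0 \<in> S \<and> (\<forall>x\<in>S. \<forall>y\<in>S. x + y \<in> S) \<and> (\<forall>c. \<forall>x\<in>S. cscale c x \<in> S)"

lemma csub_0: "csub S \<Longrightarrow> 0 \<in> S" by (simp add: csub_def)
lemma csub_add: "csub S \<Longrightarrow> x \<in> S \<Longrightarrow> y \<in> S \<Longrightarrow> x + y \<in> S" by (simp add: csub_def)
lemma csub_cscale: "csub S \<Longrightarrow> x \<in> S \<Longrightarrow> cscale c x \<in> S" by (simp add: csub_def)
lemma csub_minus: "csub S \<Longrightarrow> x \<in> S \<Longrightarrow> - x \<in> S"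
  using csub_cscale[of S x "-1"] by (simp add: cscale_minus_left cscale_one)
lemma csub_diff: "csub S \<Longrightarrow> x \<in> S \<Longrightarrow> y \<in> S \<Longrightarrow> x - y \<in> S"
  by (metis csub_add csub_minus diff_conv_add_uminus)
lemma csub_scaleR: "csub S \<Longrightarrow> x \<in> S \<Longrightarrow> scaleR r x \<in> S"
  by (simp add: csub_cscale scaleR_cscale)
lemma csub_sum: "csub S \<Longrightarrow> (\<And>i. i \<in> A \<Longrightarrow> f i \<in> S) \<Longrightarrow> sum f A \<in> S"
  by (induction A rule: infinite_finite_induct) (auto simp: csub_0 csub_add)

lemma c_span_lin: "(\<forall>i<(k::nat). v i \<in> S) \<Longrightarrow> (\<Sum>i<k. cscale (c i) (v i)) \<in> c_span S"
  unfolding c_span_def by blast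

lemma c_span_base: "x \<in> S \<Longrightarrow> x \<in> c_span S"
  using c_span_lin[of "Suc 0" "\<lambda>_. x" S "\<lambda>_. 1"] by (simp add: cscale_one)

lemma sum_lessThan_concat:
  fixes k1 k2 :: nat shows "(\<Sum>i<k1+k2. f i) = (\<Sum>i<k1. f i) + (\<Sum>i<k2. f (k1 + i))"
proof -
  have "sum f {0..<k1} + sum f {k1..<k1+k2} = sum f {0..<k1+k2}"
    by (rule sum.atLeastLessThan_concat) auto
  then have "(\<Sum>i<k1+k2. f i) = sum f {0..<k1} + sum f {k1..<k1+k2}"
    by (simp add: atLeast0LessThan)
  moreover have "sum f {k1..<k1+k2} = (\<Sum>i<k2. f (k1 + i))"
    using sum.shift_bounds_nat_ivl[of f 0 k1 k2] by (simp add: atLeast0LessThan add.commute)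
  ultimately show ?thesis by (simp add: atLeast0LessThan)
qed

lemma csub_c_span: "csub (c_span S)"
  unfolding csub_def
proof (intro conjI ballI allI)
  show "0 \<in> c_span S" using c_span_lin[of 0 "\<lambda>_. 0" S "\<lambda>_. 0"] by simp
next
  fix x y assume "x \<in> c_span S" "y \<in> c_span S"
  then obtain k1 c1 v1 k2 c2 v2 where 1: "\<forall>i<(k1::nat). v1 i \<in> S" "x = (\<Sum>i<k1. cscale (c1 i) (v1 i))"
    and 2: "\<forall>i<(k2::nat). v2 i \<in> S" "y = (\<Sum>i<k2. cscale (c2 i) (v2 i))"
    unfolding c_span_def by blast
  define c where "c i = (if i < k1 then c1 i else c2 (i - k1))" for i
  define v where "v i = (if i < k1 then v1 i else v2 (i - k1))" for i
  have "(\<Sum>i<k1+k2. cscale (c i) (v i)) = x + y"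
    unfolding sum_lessThan_concat 1 2 c_def v_def by simp
  moreover have "\<forall>i<k1+k2. v i \<in> S" using 1 2 by (auto simp: v_def)
  ultimately show "x + y \<in> c_span S" using c_span_lin by metis
next
  fix d x assume "x \<in> c_span S"
  then obtain k c v where 1: "\<forall>i<(k::nat). v i \<in> S" "x = (\<Sum>i<k. cscale (c i) (v i))"
    unfolding c_span_def by blast
  have "cscale d x = (\<Sum>i<k. cscale (d * c i) (v i))"
    by (simp add: 1 cscale_sum_right cscale_cscale)
  then show "cscale d x \<in> c_span S" using c_span_lin 1 by metis
qed

lemma c_span_minimal: "csub T \<Longrightarrow> S \<subseteq> T \<Longrightarrow> c_span S \<subseteq> T"
  unfolding c_span_def by (auto intro!: csub_sum csub_cscale)

lemma c_span_mono: "S \<subseteq> T \<Longrightarrow> c_span S \<subseteq> c_span T"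
  by (meson c_span_base c_span_minimal csub_c_span subset_iff)

lemma c_span_induct:
  assumes "x \<in> c_span S" "P 0" "\<And>x y. P x \<Longrightarrow> P y \<Longrightarrow> P (x + y)"
    "\<And>c v. v \<in> S \<Longrightarrow> P (cscale c v)"
  shows "P x"
proof -
  from assms(1) obtain k c v where 1: "\<forall>i<(k::nat). v i \<in> S" "x = (\<Sum>i<k. cscale (c i) (v i))"
    unfolding c_span_def by auto
  have "P (\<Sum>i<k'. cscale (c i) (v i))" if "k' \<le> k" for k'
    using that by (induction k') (auto simp: assms(2,3,4) 1)
  then show ?thesis using 1 by simp
qed

lemma csub_closure:
  fixes S :: "'a::complex_inner set"
  assumes "csub S" shows "csub (closure S)"
  unfolding csub_def
proof (intro conjI ballI allI)
  show "0 \<in> closure S" using assms csub_0 closure_subset by blast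
next
  fix x y assume "x \<in> closure S" "y \<in> closure S"
  then obtain f g where "\<forall>n. f n \<in> S" "f \<longlonglongrightarrow> x" "\<forall>n. g n \<in> S" "g \<longlonglongrightarrow> y"
    unfolding closure_sequential by blast
  then show "x + y \<in> closure S" unfolding closure_sequential
    by (intro exI[of _ "\<lambda>n. f n + g n"]) (auto intro: tendsto_add csub_add[OF assms])
next
  fix c x assume "x \<in> closure S"
  then obtain f where "\<forall>n. f n \<in> S" "f \<longlonglongrightarrow> x"
    unfolding closure_sequential by blast
  then show "cscale c x \<in> closure S" unfolding closure_sequential
    by (intro exI[of _ "\<lambda>n. cscale c (f n)"]) (auto intro: tendsto_cscale csub_cscale[OF assms])
qed

lemma orth_real_to_complex:
  assumes "csub V" "\<And>y. y \<in> V \<Longrightarrow> inner y z = 0" "y \<in> V"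
  shows "cinner y z = 0"
proof -
  have "Re (cinner y z) = 0" using assms(2)[OF assms(3)] by (simp add: inner_cinner)
  moreover have "Re (cinner (cscale \<i> y) z) = 0"
    using assms(2)[OF csub_cscale[OF assms(1) assms(3)]] by (simp add: inner_cinner)
  then have "Im (cinner y z) = 0" by (simp add: cinner_cscale_left)
  ultimately show ?thesis by (simp add: complex_eq_iff)
qed

lemma proj_exists:
  fixes x :: "'a::{complex_inner,complete_space}"
  assumes V: "csub V" "closed V"
  shows "\<exists>p\<in>V. \<forall>y\<in>V. cinner y (x - p) = 0"
proof -
  define d where "d = Inf ((\<lambda>v. norm (x - v)) ` V)"
  have ne: "(\<lambda>v. norm (x - v)) ` V \<noteq> {}" using csub_0[OF V(1)] by blast
  have bdd: "bdd_below ((\<lambda>v. norm (x - v)) ` V)" by (rule bdd_belowI[of _ 0]) auto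
  have dle: "d \<le> norm (x - v)" if "v \<in> V" for v
    unfolding d_def using bdd that by (simp add: cInf_lower)
  have d0: "0 \<le> d" unfolding d_def using ne by (intro cInf_greatest) auto
  have "\<exists>v\<in>V. norm (x - v) < d + 1 / (real n + 1)" for n
  proof -
    have "Inf ((\<lambda>v. norm (x - v)) ` V) < d + 1 / (real n + 1)"
      unfolding d_def[symmetric] by (simp add: add_pos_pos)
    from cInf_lessD[OF ne this] show ?thesis by blast
  qed
  then obtain v where v: "\<And>n. v n \<in> V" "\<And>n. norm (x - v n) < d + 1 / (real n + 1)"
    by metis
  have para: "(norm (v m - v n))\<^sup>2 \<le> 2 * (d + 1 / (real m + 1))\<^sup>2 + 2 * (d + 1 / (real n + 1))\<^sup>2 - 4 * d\<^sup>2"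
    for m n
  proof -
    have mid: "scaleR (1/2) (v m + v n) \<in> V" using V(1) v(1) by (intro csub_scaleR csub_add) auto
    have pl: "(norm (v m - v n))\<^sup>2 = 2 * (norm (x - v m))\<^sup>2 + 2 * (norm (x - v n))\<^sup>2
        - 4 * (norm (x - scaleR (1/2) (v m + v n)))\<^sup>2"
      unfolding power2_norm_eq_inner
      by (simp add: inner_diff_left inner_diff_right inner_add_left inner_add_right inner_commute
          algebra_simps)
    have "d \<le> norm (x - scaleR (1/2) (v m + v n))" using dle[OF mid] .
    then have a: "4 * d\<^sup>2 \<le> 4 * (norm (x - scaleR (1/2) (v m + v n)))\<^sup>2"
      using d0 by (simp add: power_mono)
    have b: "(norm (x - v m))\<^sup>2 \<le> (d + 1 / (real m + 1))\<^sup>2"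
      using v(2)[of m] by (intro power_mono) auto
    have c: "(norm (x - v n))\<^sup>2 \<le> (d + 1 / (real n + 1))\<^sup>2"
      using v(2)[of n] by (intro power_mono) auto
    show ?thesis using pl a b c by linarith
  qed
  have "Cauchy v"
  proof (rule metric_CauchyI)
    fix e :: real assume e: "e > 0"
    define \<delta> where "\<delta> = min 1 (e\<^sup>2 / (2 * (8 * d + 4)))"
    have \<delta>: "\<delta> > 0" "\<delta> \<le> 1"
      using e d0 by (auto simp: \<delta>_def min_def field_simps)
    have "\<delta> \<le> e\<^sup>2 / (2 * (8 * d + 4))" by (simp add: \<delta>_def)
    then have \<delta>3: "\<delta> * (8 * d + 4) \<le> e\<^sup>2 / 2" using d0 by (simp add: le_divide_eq algebra_simps)
    obtain N where "inverse (real (Suc N)) < \<delta>"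
      using reals_Archimedean[OF \<delta>(1)] by blast
    then have N: "1 / (real N + 1) < \<delta>" by (simp add: inverse_eq_divide add.commute)
    show "\<exists>M. \<forall>m\<ge>M. \<forall>n\<ge>M. dist (v m) (v n) < e"
    proof (intro exI allI impI)
      fix m n assume mn: "N \<le> m" "N \<le> n"
      have em: "1 / (real m + 1) < \<delta>" "1 / (real n + 1) < \<delta>"
        using N mn by (auto intro: le_less_trans[OF _ N] simp: frac_le)
      have "(d + 1 / (real m + 1))\<^sup>2 \<le> (d + \<delta>)\<^sup>2" "(d + 1 / (real n + 1))\<^sup>2 \<le> (d + \<delta>)\<^sup>2"
        using em d0 by (auto intro!: power_mono)
      then have "(norm (v m - v n))\<^sup>2 \<le> 4 * (d + \<delta>)\<^sup>2 - 4 * d\<^sup>2" using para[of m n] by linarith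
      also have "\<dots> = \<delta> * (8 * d + 4 * \<delta>)" by (simp add: power2_eq_square algebra_simps)
      also have "\<dots> \<le> \<delta> * (8 * d + 4)" using \<delta> by (intro mult_left_mono) auto
      also have "\<dots> < e\<^sup>2"
      proof -
        have "0 < e\<^sup>2" using e by simp
        then show ?thesis using \<delta>3 by linarith
      qed
      finally have "(norm (v m - v n))\<^sup>2 < e\<^sup>2" .
      then show "dist (v m) (v n) < e" using e by (simp add: dist_norm power_less_imp_less_base)
    qed
  qed
  then obtain p where p: "v \<longlonglongrightarrow> p" using Cauchy_convergent_iff convergent_def by blast
  have pV: "p \<in> V" using V(2) v(1) p closed_sequentially by blast
  have "(\<lambda>n. norm (x - v n)) \<longlonglongrightarrow> norm (x - p)" by (intro tendsto_intros p)
  moreover have "(\<lambda>n. norm (x - v n)) \<longlonglongrightarrow> d"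
  proof (rule real_tendsto_sandwich[where f="\<lambda>_. d" and h="\<lambda>n. d + 1 / (real n + 1)"])
    show "\<forall>\<^sub>F n in sequentially. d \<le> norm (x - v n)" by (intro always_eventually allI dle v(1))
    show "\<forall>\<^sub>F n in sequentially. norm (x - v n) \<le> d + 1 / (real n + 1)"
      by (intro always_eventually allI less_imp_le v(2))
    show "(\<lambda>_. d) \<longlonglongrightarrow> d" by simp
    show "(\<lambda>n. d + 1 / (real n + 1)) \<longlonglongrightarrow> d"
      using LIMSEQ_inverse_real_of_nat_add[of d]
      by (simp add: inverse_eq_divide add.commute)
  qed
  ultimately have dp: "norm (x - p) = d" using LIMSEQ_unique by blast
  have "inner y (x - p) = 0" if y: "y \<in> V" for y
  proof (rule ccontr)
    define a where "a = inner y (x - p)"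
    define b where "b = (norm y)\<^sup>2"
    assume "inner y (x - p) \<noteq> 0"
    then have a0: "a \<noteq> 0" by (simp add: a_def)
    define t where "t = a / (b + 1)"
    have b0: "b \<ge> 0" by (simp add: b_def)
    have "p + scaleR t y \<in> V" using V(1) pV y by (intro csub_add csub_scaleR)
    then have "d \<le> norm (x - (p + scaleR t y))" by (rule dle)
    then have "(norm (x - p))\<^sup>2 \<le> (norm ((x - p) - scaleR t y))\<^sup>2"
      using dp d0 by (simp add: power_mono algebra_simps)
    also have "\<dots> = (norm (x - p))\<^sup>2 - 2 * t * a + t\<^sup>2 * b"
      unfolding power2_norm_eq_inner a_def b_def
      by (simp add: inner_diff_left inner_diff_right inner_commute power2_eq_square algebra_simps)
    finally have 1: "2 * t * a \<le> t\<^sup>2 * b" by simp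
    have ta: "t * a = a\<^sup>2 / (b + 1)" by (simp add: t_def power2_eq_square)
    have ta0: "t * a > 0" unfolding ta using a0 b0 by (simp add: add_nonneg_pos)
    have "t\<^sup>2 * b = (t * a) * (b / (b + 1))" by (simp add: t_def power2_eq_square)
    also have "\<dots> \<le> (t * a) * 1" using ta0 b0 by (intro mult_left_mono) auto
    finally show False using 1 ta0 by linarith
  qed
  then have "\<forall>y\<in>V. cinner y (x - p) = 0"
    using orth_real_to_complex[OF V(1)] by blast
  then show ?thesis using pV by blast
qed

lemma proj_unique:
  assumes V: "csub V" and p: "p \<in> V" "\<forall>y\<in>V. cinner y (x - p) = 0"
    and q: "q \<in> V" "\<forall>y\<in>V. cinner y (x - q) = 0"
  shows "p = q"
proof -
  have pq: "p - q \<in> V" using V p q by (simp add: csub_diff)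
  have "cinner (p - q) (x - q) - cinner (p - q) (x - p) = 0" using p q pq by simp
  then have "cinner (p - q) (p - q) = 0"
    by (metis cinner_diff_right diff_diff_eq2 diff_add_cancel add_diff_cancel_left')
  then show ?thesis by (simp add: cinner_self)
qed



lemma clinear_on_0: "clinear_on V T \<Longrightarrow> 0 \<in> V \<Longrightarrow> T 0 = 0"
  unfolding clinear_on_def by (metis add_0 add_cancel_right_right)
lemma clinear_on_diff: "clinear_on V T \<Longrightarrow> csub V \<Longrightarrow> x \<in> V \<Longrightarrow> y \<in> V \<Longrightarrow> T (x - y) = T x - T y"
  unfolding clinear_on_def by (metis csub_diff diff_add_cancel eq_diff_eq)
lemma clinear_on_add: "clinear_on V T \<Longrightarrow> x \<in> V \<Longrightarrow> y \<in> V \<Longrightarrow> T (x + y) = T x + T y"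
  unfolding clinear_on_def by blast
lemma clinear_on_cscale: "clinear_on V T \<Longrightarrow> x \<in> V \<Longrightarrow> T (cscale c x) = cscale c (T x)"
  unfolding clinear_on_def by blast
lemma clinear_on_sum: "clinear_on V T \<Longrightarrow> csub V \<Longrightarrow> (\<And>i. i \<in> A \<Longrightarrow> f i \<in> V) \<Longrightarrow>
    T (sum f A) = (\<Sum>i\<in>A. T (f i))"
proof (induction A rule: infinite_finite_induct)
  case (infinite A) then show ?case using clinear_on_0 csub_0 by fastforce
next
  case empty then show ?case using clinear_on_0 csub_0 by fastforce
next
  case (insert x F) then show ?case by (simp add: clinear_on_add csub_sum)
qed

lemma c_span_map:
  assumes "clinear_on D T" "csub D" "X \<subseteq> D" "\<And>x. x \<in> X \<Longrightarrow> T x \<in> W" "csub W"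
    "x \<in> c_span X"
  shows "T x \<in> W"
proof -
  have "x \<in> D \<and> T x \<in> W"
    using assms(6)
  proof (rule c_span_induct)
    show "0 \<in> D \<and> T 0 \<in> W" using assms clinear_on_0 csub_0 by metis
    show "x + y \<in> D \<and> T (x + y) \<in> W" if "x \<in> D \<and> T x \<in> W" "y \<in> D \<and> T y \<in> W" for x y
      using that assms by (simp add: csub_add clinear_on_add)
    show "cscale c v \<in> D \<and> T (cscale c v) \<in> W" if "v \<in> X" for c v
      using that assms by (auto simp: csub_cscale clinear_on_cscale)
  qed
  then show ?thesis by blast
qed

lemma seq_bounded_lin:
  assumes "clinear_on V T" "csub V" "\<forall>x\<in>V. norm (T x) \<le> K * norm x"
    "\<And>n. s n \<in> V" "x \<in> V" "s \<longlonglongrightarrow> x"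
  shows "(\<lambda>n. T (s n)) \<longlonglongrightarrow> T x"
proof -
  have "(\<lambda>n. T (s n) - T x) \<longlonglongrightarrow> 0"
  proof (rule tendsto_0_le[where K=K])
    show "(\<lambda>n. s n - x) \<longlonglongrightarrow> 0" using assms(6) by (rule LIM_zero)
    show "\<forall>\<^sub>F n in sequentially. norm (T (s n) - T x) \<le> norm (s n - x) * K"
      using assms by (auto simp: clinear_on_diff[symmetric] csub_diff mult.commute)
  qed
  then show ?thesis by (rule LIM_zero_cancel)
qed

lemma map_closure:
  fixes T :: "'a::complex_inner \<Rightarrow> 'b::complex_inner"
  assumes "clinear_on V T" "csub V" "\<forall>x\<in>V. norm (T x) \<le> K * norm x"
    "V = closure S0" "\<And>x. x \<in> S0 \<Longrightarrow> T x \<in> W" "closed W" "x \<in> V"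
  shows "T x \<in> W"
proof -
  obtain s where s: "\<And>n. s n \<in> S0" "s \<longlonglongrightarrow> x" using assms(4,7) closure_sequential by metis
  have "\<And>n. s n \<in> V" using s(1) assms(4) closure_subset by blast
  then have "(\<lambda>n. T (s n)) \<longlonglongrightarrow> T x" using seq_bounded_lin assms s by blast
  then show ?thesis by (rule closed_sequentially[OF assms(6), rotated]) (use assms(5) s(1) in auto)
qed

locale fock =
  fixes J :: "'l::{complex_inner,complete_space} \<Rightarrow> 'l"
    and a ad :: "'l \<Rightarrow> 'f::{complex_inner,complete_space} \<Rightarrow> 'f"
    and vac :: 'f
  assumes conj: "conjugation J" and rep: "fock_rep J a ad vac"
begin

abbreviation "D \<equiv> fin_dom ad vac"
abbreviation "V n \<equiv> n_part ad vac n"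
definition "S n = c_span {fock_vec ad vac fs | fs. length fs = n}"

lemma J_add: "J (x + y) = J x + J y" using conj by (simp add: conjugation_def)
lemma J_cscale: "J (cscale c x) = cscale (cnj c) (J x)" using conj by (simp add: conjugation_def)
lemma JJ[simp]: "J (J x) = x" using conj by (simp add: conjugation_def)
lemma J_cinner: "cinner (J f) (J g) = cinner g f" using conj by (simp add: conjugation_def)
lemma norm_J[simp]: "norm (J x) = norm x"
  using J_cinner[of x x] unfolding cinner_self of_real_eq_iff by (simp add: power2_eq_iff_nonneg)

lemmas R0 = rep[unfolded fock_rep_def Let_def]
lemmas RC1 = R0[THEN conjunct1]
lemmas RC2 = R0[THEN conjunct2, THEN conjunct1]
lemmas RC3 = R0[THEN conjunct2, THEN conjunct2, THEN conjunct1]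
lemmas RC4 = R0[THEN conjunct2, THEN conjunct2, THEN conjunct2, THEN conjunct1]
lemmas RC5 = R0[THEN conjunct2, THEN conjunct2, THEN conjunct2, THEN conjunct2, THEN conjunct1]
lemmas RC6 = R0[THEN conjunct2, THEN conjunct2, THEN conjunct2, THEN conjunct2, THEN conjunct2, THEN conjunct1]
lemmas RC7 = R0[THEN conjunct2, THEN conjunct2, THEN conjunct2, THEN conjunct2, THEN conjunct2, THEN conjunct2, THEN conjunct1]
lemmas RC8 = R0[THEN conjunct2, THEN conjunct2, THEN conjunct2, THEN conjunct2, THEN conjunct2, THEN conjunct2, THEN conjunct2, THEN conjunct1]
lemmas RC9 = R0[THEN conjunct2, THEN conjunct2, THEN conjunct2, THEN conjunct2, THEN conjunct2, THEN conjunct2, THEN conjunct2, THEN conjunct2, THEN conjunct1]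
lemmas RC10 = R0[THEN conjunct2, THEN conjunct2, THEN conjunct2, THEN conjunct2, THEN conjunct2, THEN conjunct2, THEN conjunct2, THEN conjunct2, THEN conjunct2, THEN conjunct1]
lemmas RC11 = R0[THEN conjunct2, THEN conjunct2, THEN conjunct2, THEN conjunct2, THEN conjunct2, THEN conjunct2, THEN conjunct2, THEN conjunct2, THEN conjunct2, THEN conjunct2, THEN conjunct1]
lemmas RC12 = R0[THEN conjunct2, THEN conjunct2, THEN conjunct2, THEN conjunct2, THEN conjunct2, THEN conjunct2, THEN conjunct2, THEN conjunct2, THEN conjunct2, THEN conjunct2, THEN conjunct2]
lemma R1: "norm vac = 1" using RC1 by blast
lemma R2: "\<And>f. a f vac = 0" using RC2 by blast
lemma R3: "closure D = UNIV" using RC3 by blast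
lemma R4: "\<And>f. clinear_on D (a f)" using RC4 by blast
lemma R5: "\<And>f. clinear_on D (ad f)" using RC4 by blast
lemma R6: "\<And>f g x. x \<in> D \<Longrightarrow> a (f + g) x = a f x + a g x" using RC5 by blast
lemma R7: "\<And>f g x. x \<in> D \<Longrightarrow> ad (f + g) x = ad f x + ad g x" using RC5 by blast
lemma R8: "\<And>c f x. x \<in> D \<Longrightarrow> a (cscale c f) x = cscale c (a f x)" using RC6 by blast
lemma R9: "\<And>c f x. x \<in> D \<Longrightarrow> ad (cscale c f) x = cscale c (ad f x)" using RC6 by blast
lemma R10: "\<And>f g x. x \<in> D \<Longrightarrow> ad f (ad g x) = ad g (ad f x)" using RC8 by blast
lemma R11: "\<And>f g x. x \<in> D \<Longrightarrow> a f (ad g x) - ad g (a f x) = cscale (cinner (J f) g) x" using RC9 by blast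
lemma R12: "\<And>f x y. x \<in> D \<Longrightarrow> y \<in> D \<Longrightarrow> cinner (a f x) y = cinner x (ad (J f) y)" using RC10 by blast
lemma R13: "\<And>f n. clinear_on (V n) (a f)" using RC11 by blast
lemma R14: "\<And>f n. clinear_on (V n) (ad f)" using RC11 by blast
lemma R15: "\<And>f n. \<exists>K. \<forall>x\<in>V n. norm (a f x) \<le> K * norm x \<and> norm (ad f x) \<le> K * norm x" using RC11 by blast
lemma R16: "\<And>f x. x \<in> D_alpha ad vac (1/2) \<Longrightarrow> (\<lambda>n. a f (comp ad vac n x)) sums (a f x)" using RC12 by blast
lemma R17: "\<And>f x. x \<in> D_alpha ad vac (1/2) \<Longrightarrow> (\<lambda>n. ad f (comp ad vac n x)) sums (ad f x)" using RC12 by blast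
lemmas R = R1 R2 R3 R4 R5 R6 R7 R8 R9 R10 R11 R12 R13 R14 R15 R16 R17

lemma csub_D: "csub D" unfolding fin_dom_def by (rule csub_c_span)
lemma fv_D: "fock_vec ad vac fs \<in> D" unfolding fin_dom_def by (rule c_span_base) auto
lemma S_D: "S n \<subseteq> D" unfolding S_def fin_dom_def by (rule c_span_mono) auto
lemma csub_S: "csub (S n)" unfolding S_def by (rule csub_c_span)
lemma V_S: "V n = closure (S n)" unfolding S_def n_part_def by simp
lemma csub_V: "csub (V n)" unfolding V_S by (intro csub_closure csub_S)
lemma closed_V: "closed (V n)" unfolding V_S by simp
lemma S_V: "S n \<subseteq> V n" unfolding V_S by (rule closure_subset)
lemma fv_S: "fock_vec ad vac fs \<in> S (length fs)" unfolding S_def by (rule c_span_base) auto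

lemma ad_D: assumes "x \<in> D" shows "ad f x \<in> D"
proof (rule c_span_map[OF R(5) csub_D])
  show "range (fock_vec ad vac) \<subseteq> D" using fv_D by blast
  show "ad f y \<in> D" if "y \<in> range (fock_vec ad vac)" for y
    using that fv_D[of "f # _"] by auto
  show "csub D" by (rule csub_D)
  show "x \<in> c_span (range (fock_vec ad vac))" using assms by (simp add: fin_dom_def)
qed

lemma ad_S: assumes "x \<in> S n" shows "ad f x \<in> S (Suc n)"
proof (rule c_span_map[OF R(5) csub_D])
  show "{fock_vec ad vac fs |fs. length fs = n} \<subseteq> D" using fv_D by blast
  show "ad f y \<in> S (Suc n)" if "y \<in> {fock_vec ad vac fs |fs. length fs = n}" for y
    using that fv_S[of "f # _"] by auto
  show "csub (S (Suc n))" by (rule csub_S)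
  show "x \<in> c_span {fock_vec ad vac fs |fs. length fs = n}" using assms by (simp add: S_def)
qed

lemma a_fv: "a f (fock_vec ad vac fs) \<in> S (length fs - 1) \<and> (fs = [] \<longrightarrow> a f (fock_vec ad vac fs) = 0)"
proof (induction fs)
  case Nil then show ?case using R(2) csub_0[OF csub_S] by simp
next
  case (Cons g fs)
  have "a f (ad g (fock_vec ad vac fs)) = ad g (a f (fock_vec ad vac fs)) + cscale (cinner (J f) g) (fock_vec ad vac fs)"
    using R(11)[OF fv_D, of f g fs] by (simp add: algebra_simps)
  moreover have "ad g (a f (fock_vec ad vac fs)) \<in> S (length fs)"
  proof (cases fs)
    case Nil then show ?thesis using Cons R(2) R(5) clinear_on_0 csub_0 csub_D csub_S
      by (metis fock_vec.simps(1))
  next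
    case (Cons h hs) then show ?thesis using \<open>a f (fock_vec ad vac fs) \<in> _ \<and> _\<close> ad_S by fastforce
  qed
  moreover have "cscale (cinner (J f) g) (fock_vec ad vac fs) \<in> S (length fs)"
    by (intro csub_cscale csub_S fv_S)
  ultimately show ?case by (simp add: csub_add csub_S)
qed

lemma a_D: assumes "x \<in> D" shows "a f x \<in> D"
proof (rule c_span_map[OF R(4) csub_D])
  show "range (fock_vec ad vac) \<subseteq> D" using fv_D by blast
  show "a f y \<in> D" if "y \<in> range (fock_vec ad vac)" for y
    using that a_fv S_D by blast
  show "csub D" by (rule csub_D)
  show "x \<in> c_span (range (fock_vec ad vac))" using assms by (simp add: fin_dom_def)
qed

lemma a_S: assumes "x \<in> S (Suc n)" shows "a f x \<in> S n"
proof (rule c_span_map[OF R(4) csub_D])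
  show "{fock_vec ad vac fs |fs. length fs = Suc n} \<subseteq> D" using fv_D by blast
  show "a f y \<in> S n" if y: "y \<in> {fock_vec ad vac fs |fs. length fs = Suc n}" for y
  proof -
    obtain fs where "y = fock_vec ad vac fs" "length fs = Suc n" using y by blast
    then show ?thesis using a_fv[of f fs] by simp
  qed
  show "csub (S n)" by (rule csub_S)
  show "x \<in> c_span {fock_vec ad vac fs |fs. length fs = Suc n}" using assms by (simp add: S_def)
qed

lemma a_S0: assumes "x \<in> S 0" shows "a f x = 0"
proof -
  have "a f x \<in> {0}"
  proof (rule c_span_map[OF R(4) csub_D])
    show "{fock_vec ad vac fs |fs. length fs = 0} \<subseteq> D" using fv_D by blast
    show "a f y \<in> {0}" if "y \<in> {fock_vec ad vac fs |fs. length fs = 0}" for y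
      using that R(2) by auto
    show "csub {0::'f}" by (simp add: csub_def)
    show "x \<in> c_span {fock_vec ad vac fs |fs. length fs = 0}" using assms by (simp add: S_def)
  qed
  then show ?thesis by simp
qed

end


lemma closure_zero:
  assumes "bounded_linear f" "\<And>x. x \<in> S0 \<Longrightarrow> f x = 0" "x \<in> closure S0"
  shows "f x = 0"
proof -
  obtain s where s: "\<And>n. s n \<in> S0" "s \<longlonglongrightarrow> x" using assms(3) closure_sequential by metis
  have "(\<lambda>n. f (s n)) \<longlonglongrightarrow> f x" using bounded_linear.tendsto[OF assms(1) s(2)] .
  moreover have "(\<lambda>n. f (s n)) = (\<lambda>n. 0)" using assms(2) s(1) by auto
  ultimately show ?thesis using LIMSEQ_unique tendsto_const by metis
qed

context fock begin

lemma adj_D: "x \<in> D \<Longrightarrow> y \<in> D \<Longrightarrow> cinner x (ad g y) = cinner (a (J g) x) y"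
  using R(12)[of x y "J g"] by simp

lemma orth_gen:
  assumes "\<And>gs. length gs = m \<Longrightarrow> cinner u (fock_vec ad vac gs) = 0" "v \<in> S m"
  shows "cinner u v = 0"
  using assms(2) unfolding S_def
  by (rule c_span_induct) (auto simp: cinner_add_right cinner_cscale_right assms(1))

lemma fv_orth: "length fs \<noteq> length gs \<Longrightarrow> cinner (fock_vec ad vac fs) (fock_vec ad vac gs) = 0"
proof (induction fs arbitrary: gs)
  case Nil
  then obtain g gs' where gs: "gs = g # gs'" by (cases gs) auto
  show ?case using adj_D[OF fv_D fv_D, of "[]" g gs'] by (simp add: gs R(2))
next
  case (Cons f fs)
  have "cinner (fock_vec ad vac (f # fs)) (fock_vec ad vac gs)
      = cnj (cinner (fock_vec ad vac gs) (ad f (fock_vec ad vac fs)))"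
    by (simp add: cinner_cnj[of _ "fock_vec ad vac gs"])
  also have "\<dots> = cnj (cinner (a (J f) (fock_vec ad vac gs)) (fock_vec ad vac fs))"
    by (simp add: adj_D fv_D)
  also have "\<dots> = cinner (fock_vec ad vac fs) (a (J f) (fock_vec ad vac gs))"
    by (metis cinner_cnj)
  also have "\<dots> = 0"
  proof (cases gs)
    case Nil then show ?thesis by (simp add: R(2))
  next
    case (Cons g gs')
    have "a (J f) (fock_vec ad vac gs) \<in> S (length gs')" using a_fv[of "J f" gs] Cons by simp
    moreover have "length fs \<noteq> length gs'" using Cons.prems \<open>gs = g # gs'\<close> by simp
    ultimately show ?thesis using orth_gen Cons.IH by metis
  qed
  finally show ?case .
qed

lemma S_orth: "u \<in> S n \<Longrightarrow> v \<in> S m \<Longrightarrow> n \<noteq> m \<Longrightarrow> cinner u v = 0"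
proof -
  assume u: "u \<in> S n" and v: "v \<in> S m" and nm: "n \<noteq> m"
  have "cinner (fock_vec ad vac gs) u = 0" if "length gs = m" for gs
    using orth_gen[OF _ u, of "fock_vec ad vac gs"] fv_orth that nm by metis
  then have "cinner u (fock_vec ad vac gs) = 0" if "length gs = m" for gs
    using that by (metis cinner_cnj complex_cnj_zero)
  then show ?thesis using orth_gen v by metis
qed

lemma V_orth: "u \<in> V n \<Longrightarrow> v \<in> V m \<Longrightarrow> n \<noteq> m \<Longrightarrow> cinner u v = 0"
proof -
  assume u: "u \<in> V n" and v: "v \<in> V m" and nm: "n \<noteq> m"
  have "cinner u w = 0" if w: "w \<in> S m" for w
    using closure_zero[OF bounded_linear_cinner_left[of w], of "S n" u] S_orth[OF _ w nm] u
    by (simp add: V_S)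
  then show ?thesis
    using closure_zero[OF bounded_linear_cinner_right[of u], of "S m" v] v by (simp add: V_S)
qed

lemma bound_V: obtains K where "\<forall>x\<in>V n. norm (a f x) \<le> K * norm x" "\<forall>x\<in>V n. norm (ad f x) \<le> K * norm x"
  using R(15)[where f=f and n=n] by blast

lemma a_V: "x \<in> V (Suc n) \<Longrightarrow> a f x \<in> V n"
proof -
  assume x: "x \<in> V (Suc n)"
  obtain K where K: "\<forall>x\<in>V (Suc n). norm (a f x) \<le> K * norm x" using bound_V by metis
  show ?thesis
    by (rule map_closure[OF R(13) csub_V K V_S]) (auto intro: S_V[THEN subsetD] a_S closed_V x)
qed

lemma a_V0: "x \<in> V 0 \<Longrightarrow> a f x = 0"
proof -
  assume x: "x \<in> V 0"
  obtain K where K: "\<forall>x\<in>V 0. norm (a f x) \<le> K * norm x" using bound_V by metis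
  have "a f x \<in> {0}"
    by (rule map_closure[OF R(13) csub_V K V_S]) (use a_S0 x in auto)
  then show ?thesis by simp
qed

lemma ad_V: "x \<in> V n \<Longrightarrow> ad f x \<in> V (Suc n)"
proof -
  assume x: "x \<in> V n"
  obtain K where K: "\<forall>x\<in>V n. norm (ad f x) \<le> K * norm x" using bound_V by metis
  show ?thesis
    by (rule map_closure[OF R(14) csub_V K V_S]) (auto intro: S_V[THEN subsetD] ad_S closed_V x)
qed

lemma seq_a: "(\<And>k. s k \<in> V n) \<Longrightarrow> x \<in> V n \<Longrightarrow> s \<longlonglongrightarrow> x \<Longrightarrow> (\<lambda>k. a f (s k)) \<longlonglongrightarrow> a f x"
  using bound_V[where n=n and f=f] seq_bounded_lin[OF R(13) csub_V] by metis
lemma seq_ad: "(\<And>k. s k \<in> V n) \<Longrightarrow> x \<in> V n \<Longrightarrow> s \<longlonglongrightarrow> x \<Longrightarrow> (\<lambda>k. ad f (s k)) \<longlonglongrightarrow> ad f x"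
  using bound_V[where n=n and f=f] seq_bounded_lin[OF R(14) csub_V] by metis

lemma adj_V:
  assumes u: "u \<in> V (Suc n)" and v: "v \<in> V n"
  shows "cinner u (ad g v) = cinner (a (J g) u) v"
proof -
  have step2: "cinner u' (ad g w) = cinner (a (J g) u') w" if w: "w \<in> S n" and u': "u' \<in> V (Suc n)" for w u'
  proof -
    obtain s where s: "\<And>k. s k \<in> S (Suc n)" "s \<longlonglongrightarrow> u'" using u' V_S closure_sequential by metis
    have sV: "\<And>k. s k \<in> V (Suc n)" using s(1) S_V by blast
    have "(\<lambda>k. cinner (s k) (ad g w)) \<longlonglongrightarrow> cinner u' (ad g w)" by (rule tendsto_cinner_left[OF s(2)])
    moreover have "(\<lambda>k. cinner (a (J g) (s k)) w) \<longlonglongrightarrow> cinner (a (J g) u') w"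
      by (rule tendsto_cinner_left[OF seq_a[OF sV u' s(2)]])
    moreover have "\<And>k. cinner (s k) (ad g w) = cinner (a (J g) (s k)) w"
      using adj_D s(1) w S_D by blast
    ultimately show ?thesis using LIMSEQ_unique by fastforce
  qed
  obtain s where s: "\<And>k. s k \<in> S n" "s \<longlonglongrightarrow> v" using v V_S closure_sequential by metis
  have sV: "\<And>k. s k \<in> V n" using s(1) S_V by blast
  have "(\<lambda>k. cinner u (ad g (s k))) \<longlonglongrightarrow> cinner u (ad g v)"
    by (rule tendsto_cinner_right[OF seq_ad[OF sV v s(2)]])
  moreover have "(\<lambda>k. cinner (a (J g) u) (s k)) \<longlonglongrightarrow> cinner (a (J g) u) v"
    by (rule tendsto_cinner_right[OF s(2)])
  moreover have "\<And>k. cinner u (ad g (s k)) = cinner (a (J g) u) (s k)"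
    using step2 s(1) u by blast
  ultimately show ?thesis using LIMSEQ_unique by fastforce
qed

lemma comp_ex: "\<exists>!p. p \<in> V n \<and> (\<forall>y\<in>V n. cinner y (x - p) = 0)"
  using proj_exists[OF csub_V closed_V, of n x] proj_unique[OF csub_V, of _ n x] by blast

lemma comp_in: "comp ad vac n x \<in> V n"
  and comp_orth: "y \<in> V n \<Longrightarrow> cinner y (x - comp ad vac n x) = 0"
  using theI'[OF comp_ex[of n x]] unfolding comp_def by auto

lemma comp_eq: "p \<in> V n \<Longrightarrow> (\<And>y. y \<in> V n \<Longrightarrow> cinner y (x - p) = 0) \<Longrightarrow> comp ad vac n x = p"
  unfolding comp_def using comp_ex by (intro the1_equality) auto

lemma comp_cinner: "y \<in> V n \<Longrightarrow> cinner y x = cinner y (comp ad vac n x)"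
  using comp_orth[of y n x] by (simp add: cinner_diff_right)

lemma comp_cinner': "y \<in> V n \<Longrightarrow> cinner x y = cinner (comp ad vac n x) y"
  using comp_cinner by (metis cinner_cnj)

end


definition orthonormal :: "(nat \<Rightarrow> 'a::complex_inner) \<Rightarrow> nat set \<Rightarrow> bool" where
  "orthonormal z I \<longleftrightarrow> (\<forall>i\<in>I. \<forall>j\<in>I. cinner (z i) (z j) = (if i = j then 1 else 0))"

lemma on_coef:
  assumes "orthonormal z I" "finite I" "j \<in> I"
  shows "cinner (z j) (\<Sum>i\<in>I. cscale (c i) (z i)) = c j"
proof -
  have "cinner (z j) (\<Sum>i\<in>I. cscale (c i) (z i)) = (\<Sum>i\<in>I. c i * (if j = i then 1 else 0))"
    using assms(1,3) unfolding orthonormal_def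
    by (simp add: cinner_sum_right cinner_cscale_right)
  also have "\<dots> = c j" using assms(2,3) by (simp add: if_distrib cong: if_cong)
  finally show ?thesis .
qed

lemma on_cinner_self:
  assumes "orthonormal z I" "finite I"
  shows "cinner (\<Sum>i\<in>I. cscale (c i) (z i)) (\<Sum>i\<in>I. cscale (c i) (z i)) = (\<Sum>i\<in>I. complex_of_real ((cmod (c i))\<^sup>2))"
proof -
  have "cinner (\<Sum>i\<in>I. cscale (c i) (z i)) (\<Sum>i\<in>I. cscale (c i) (z i))
      = (\<Sum>i\<in>I. cnj (c i) * cinner (z i) (\<Sum>i\<in>I. cscale (c i) (z i)))"
    by (simp add: cinner_sum_left cinner_cscale_left)
  also have "\<dots> = (\<Sum>i\<in>I. cnj (c i) * c i)"
    using on_coef[OF assms] by simp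
  also have "\<dots> = (\<Sum>i\<in>I. complex_of_real ((cmod (c i))\<^sup>2))"
    by (intro sum.cong refl) (metis complex_norm_square mult.commute)
  finally show ?thesis .
qed

lemma on_norm:
  assumes "orthonormal z I" "finite I"
  shows "(norm (\<Sum>i\<in>I. cscale (c i) (z i)))\<^sup>2 = (\<Sum>i\<in>I. (cmod (c i))\<^sup>2)"
  using on_cinner_self[OF assms, of c] unfolding cinner_self of_real_sum[symmetric] of_real_eq_iff .

lemma span_orth:
  assumes "orthonormal z {..<p}" "j < p" "cinner (z j) w = 0" "\<forall>i<p. cinner (z i) w = 0 \<or> i \<noteq> j"
  shows True by simp

lemma gram_schmidt:
  fixes vs :: "'a::complex_inner list"
  shows "\<exists>p z. orthonormal z {..<p} \<and> (\<forall>v\<in>set vs. v = (\<Sum>i<p. cscale (cinner (z i) v) (z i)))"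
proof (induction vs)
  case Nil
  show ?case by (rule exI[of _ 0]) (simp add: orthonormal_def)
next
  case (Cons v vs)
  then obtain p z where on: "orthonormal z {..<p}"
    and sp: "\<forall>u\<in>set vs. u = (\<Sum>i<p. cscale (cinner (z i) u) (z i))" by blast
  define r where "r = v - (\<Sum>i<p. cscale (cinner (z i) v) (z i))"
  have rorth: "cinner (z j) r = 0" if "j < p" for j
    using on_coef[OF on _, of j "\<lambda>i. cinner (z i) v"] that by (simp add: r_def cinner_diff_right)
  show ?case
  proof (cases "r = 0")
    case True
    then show ?thesis using on sp by (intro exI[of _ p] exI[of _ z]) (auto simp: r_def)
  next
    case False
    define z' where "z' = z(p := cscale (complex_of_real (1 / norm r)) r)"
    have nr: "norm r > 0" using False by simp
    have "norm (z' p) = 1" using nr by (simp add: z'_def norm_cscale norm_divide)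
    then have z'p: "cinner (z' p) (z' p) = 1" by (simp add: cinner_self)
    have z'o: "cinner (z' j) (z' p) = 0" if "j < p" for j
      using rorth[OF that] that by (simp add: z'_def cinner_cscale_right)
    have on': "orthonormal z' {..<Suc p}"
      unfolding orthonormal_def
    proof (intro ballI)
      fix i j assume i: "i \<in> {..<Suc p}" and j: "j \<in> {..<Suc p}"
      show "cinner (z' i) (z' j) = (if i = j then 1 else 0)"
      proof (cases "i = p"; cases "j = p")
        assume "i = p" "j = p" then show ?thesis using z'p by simp
      next
        assume "i = p" "j \<noteq> p"
        then have "j < p" using j by simp
        then show ?thesis using z'o[of j] \<open>i = p\<close> by (metis cinner_cnj complex_cnj_zero less_irrefl)
      next
        assume "i \<noteq> p" "j = p"
        then show ?thesis using z'o[of i] i by simp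
      next
        assume "i \<noteq> p" "j \<noteq> p"
        then show ?thesis using on i j by (simp add: z'_def orthonormal_def)
      qed
    qed
    have sumz: "(\<Sum>i<p. cscale (cinner (z' i) u) (z' i)) = (\<Sum>i<p. cscale (cinner (z i) u) (z i))" for u
      by (intro sum.cong) (auto simp: z'_def)
    have old: "u = (\<Sum>i<Suc p. cscale (cinner (z' i) u) (z' i))" if u: "u \<in> set vs" for u
    proof -
      have "cinner (z' p) u = cinner (z' p) (\<Sum>i<p. cscale (cinner (z i) u) (z i))"
        using sp u by metis
      also have "\<dots> = (\<Sum>i<p. cinner (z i) u * cinner (z' p) (z i))"
        by (simp add: cinner_sum_right cinner_cscale_right)
      also have "\<dots> = 0"
      proof (intro sum.neutral ballI)
        fix i assume "i \<in> {..<p}"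
        then have "cinner (z' p) (z i) = 0" using z'o[of i] by (metis cinner_cnj complex_cnj_zero fun_upd_other lessThan_iff less_irrefl z'_def)
        then show "cinner (z i) u * cinner (z' p) (z i) = 0" by simp
      qed
      finally have "cinner (z' p) u = 0" .
      then have "(\<Sum>i<Suc p. cscale (cinner (z' i) u) (z' i)) = (\<Sum>i<p. cscale (cinner (z i) u) (z i))"
        by (simp add: sumz)
      then show ?thesis using sp u by metis
    qed
    have new: "v = (\<Sum>i<Suc p. cscale (cinner (z' i) v) (z' i))"
    proof -
      have c1: "cinner r (\<Sum>i<p. cscale (cinner (z i) v) (z i)) = 0"
        unfolding cinner_sum_right cinner_cscale_right
      proof (intro sum.neutral ballI)
        fix i assume "i \<in> {..<p}"
        then have "cinner r (z i) = 0" using rorth[of i] by (metis cinner_cnj complex_cnj_zero lessThan_iff)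
        then show "cinner (z i) v * cinner r (z i) = 0" by simp
      qed
      have vr: "v = r + (\<Sum>i<p. cscale (cinner (z i) v) (z i))" by (simp add: r_def)
      have crv: "cinner r v = cinner r r"
        by (subst vr, subst cinner_add_right) (simp add: c1)
      have zp: "z' p = cscale (complex_of_real (1 / norm r)) r" by (simp add: z'_def)
      have "cinner (z' p) v = complex_of_real (1 / norm r) * complex_of_real ((norm r)\<^sup>2)"
        unfolding zp cinner_cscale_left crv cinner_self by simp
      also have "\<dots> = complex_of_real (norm r)"
        using nr by (simp add: power2_eq_square flip: of_real_mult of_real_divide)
      finally have cv: "cinner (z' p) v = complex_of_real (norm r)" .
      have "cscale (cinner (z' p) v) (z' p) = cscale (complex_of_real (norm r * (1 / norm r))) r"
        unfolding cv unfolding zp cscale_cscale of_real_mult by simp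
      also have "\<dots> = r" using nr by (simp add: cscale_one)
      finally have "cscale (cinner (z' p) v) (z' p) = r" .
      then have "(\<Sum>i<Suc p. cscale (cinner (z' i) v) (z' i)) = (\<Sum>i<p. cscale (cinner (z i) v) (z i)) + r"
        by (simp add: sumz)
      then show ?thesis using vr by (simp add: add.commute)
    qed
    show ?thesis using on' old new by (intro exI[of _ "Suc p"] exI[of _ z']) auto
  qed
qed



definition in_span :: "(nat \<Rightarrow> 'a::complex_inner) \<Rightarrow> nat \<Rightarrow> 'a \<Rightarrow> bool" where
  "in_span w p g \<longleftrightarrow> g = (\<Sum>k<p. cscale (cinner (w k) g) (w k))"

context fock begin

lemma ad_zero[simp]: "ad f 0 = 0" using clinear_on_0[OF R(5) csub_0[OF csub_D]] .
lemma a_zero[simp]: "a f 0 = 0" using clinear_on_0[OF R(4) csub_0[OF csub_D]] .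
lemma a_zero_f: "x \<in> D \<Longrightarrow> a 0 x = 0" using R(6)[of x 0 0] by simp
lemma ad_zero_f: "x \<in> D \<Longrightarrow> ad 0 x = 0" using R(7)[of x 0 0] by simp
lemma a_sum_f: "x \<in> D \<Longrightarrow> a (sum g A) x = (\<Sum>i\<in>A. a (g i) x)"
  by (induction A rule: infinite_finite_induct) (auto simp: a_zero_f R(6))
lemma ad_sum_f: "x \<in> D \<Longrightarrow> ad (sum g A) x = (\<Sum>i\<in>A. ad (g i) x)"
  by (induction A rule: infinite_finite_induct) (auto simp: ad_zero_f R(7))
lemma ccr': "x \<in> D \<Longrightarrow> a f (ad g x) = ad g (a f x) + cscale (cinner (J f) g) x"
  using R(11)[of x f g] by (simp add: algebra_simps)

definition "GS n w p = c_span {fock_vec ad vac fs | fs. length fs = n \<and> (\<forall>g\<in>set fs. in_span w p g)}"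

lemma GS_S: "GS n w p \<subseteq> S n" unfolding GS_def S_def by (rule c_span_mono) blast
lemma GS_D: "GS n w p \<subseteq> D" using GS_S S_D by blast

abbreviation "NW w p x \<equiv> (\<Sum>k<p. ad (w k) (a (J (w k)) x))"

lemma NW_D: "x \<in> D \<Longrightarrow> NW w p x \<in> D"
  by (intro csub_sum[OF csub_D] ad_D a_D)

lemma number_fv:
  assumes "\<forall>g\<in>set fs. in_span w p g"
  shows "NW w p (fock_vec ad vac fs) = cscale (of_nat (length fs)) (fock_vec ad vac fs)"
  using assms
proof (induction fs)
  case Nil then show ?case by (simp add: R(2))
next
  case (Cons g fs)
  define \<Phi> where "\<Phi> = fock_vec ad vac fs"
  have \<Phi>D: "\<Phi> \<in> D" by (simp add: \<Phi>_def fv_D)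
  have IH: "NW w p \<Phi> = cscale (of_nat (length fs)) \<Phi>" using Cons by (simp add: \<Phi>_def)
  have g: "g = (\<Sum>k<p. cscale (cinner (w k) g) (w k))" using Cons.prems by (simp add: in_span_def)
  have trm: "ad (w k) (a (J (w k)) (ad g \<Phi>)) =
      ad g (ad (w k) (a (J (w k)) \<Phi>)) + cscale (cinner (w k) g) (ad (w k) \<Phi>)" for k
  proof -
    have "ad (w k) (a (J (w k)) (ad g \<Phi>)) = ad (w k) (ad g (a (J (w k)) \<Phi>) + cscale (cinner (w k) g) \<Phi>)"
      using ccr'[OF \<Phi>D, of "J (w k)" g] by simp
    also have "\<dots> = ad (w k) (ad g (a (J (w k)) \<Phi>)) + ad (w k) (cscale (cinner (w k) g) \<Phi>)"
      by (rule clinear_on_add[OF R(5)]) (auto intro: ad_D a_D \<Phi>D csub_cscale[OF csub_D])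
    also have "\<dots> = ad g (ad (w k) (a (J (w k)) \<Phi>)) + cscale (cinner (w k) g) (ad (w k) \<Phi>)"
      using R(10)[OF a_D[OF \<Phi>D]] clinear_on_cscale[OF R(5) \<Phi>D] by simp
    finally show ?thesis .
  qed
  have "NW w p (fock_vec ad vac (g # fs)) = NW w p (ad g \<Phi>)" by (simp add: \<Phi>_def)
  also have "\<dots> = (\<Sum>k<p. ad g (ad (w k) (a (J (w k)) \<Phi>))) + (\<Sum>k<p. cscale (cinner (w k) g) (ad (w k) \<Phi>))"
    by (simp add: trm sum.distrib)
  also have "(\<Sum>k<p. ad g (ad (w k) (a (J (w k)) \<Phi>))) = ad g (NW w p \<Phi>)"
    by (rule clinear_on_sum[OF R(5) csub_D, symmetric]) (intro ad_D a_D \<Phi>D)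
  also have "\<dots> = cscale (of_nat (length fs)) (ad g \<Phi>)"
    unfolding IH by (rule clinear_on_cscale[OF R(5) \<Phi>D])
  also have "(\<Sum>k<p. cscale (cinner (w k) g) (ad (w k) \<Phi>)) = (\<Sum>k<p. ad (cscale (cinner (w k) g) (w k)) \<Phi>)"
    using R(9)[OF \<Phi>D] by simp
  also have "\<dots> = ad g \<Phi>" using ad_sum_f[OF \<Phi>D] g by metis
  finally show ?case
    by (simp add: \<Phi>_def cscale_add_left cscale_one)
qed

lemma NW_add: "x \<in> D \<Longrightarrow> y \<in> D \<Longrightarrow> NW w p (x + y) = NW w p x + NW w p y"
proof -
  assume x: "x \<in> D" and y: "y \<in> D"
  have "ad (w k) (a (J (w k)) (x + y)) = ad (w k) (a (J (w k)) x) + ad (w k) (a (J (w k)) y)" for k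
    using clinear_on_add[OF R(4) x y] clinear_on_add[OF R(5) a_D[OF x] a_D[OF y]] by simp
  then show ?thesis by (simp add: sum.distrib)
qed

lemma NW_cscale: "x \<in> D \<Longrightarrow> NW w p (cscale c x) = cscale c (NW w p x)"
proof -
  assume x: "x \<in> D"
  have "ad (w k) (a (J (w k)) (cscale c x)) = cscale c (ad (w k) (a (J (w k)) x))" for k
    using clinear_on_cscale[OF R(4) x] clinear_on_cscale[OF R(5) a_D[OF x]] by simp
  then show ?thesis by (simp add: cscale_sum_right)
qed

lemma number_GS: "x \<in> GS n w p \<Longrightarrow> NW w p x = cscale (of_nat n) x"
proof -
  assume "x \<in> GS n w p"
  then have "x \<in> D \<and> NW w p x = cscale (of_nat n) x"
    unfolding GS_def
  proof (rule c_span_induct)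
    show "0 \<in> D \<and> NW w p 0 = cscale (of_nat n) 0" by (simp add: csub_0[OF csub_D])
    show "x + y \<in> D \<and> NW w p (x + y) = cscale (of_nat n) (x + y)"
      if "x \<in> D \<and> NW w p x = cscale (of_nat n) x" "y \<in> D \<and> NW w p y = cscale (of_nat n) y" for x y
      using that by (simp add: csub_add[OF csub_D] NW_add cscale_add_right)
    show "cscale c v \<in> D \<and> NW w p (cscale c v) = cscale (of_nat n) (cscale c v)"
      if v: "v \<in> {fock_vec ad vac fs |fs. length fs = n \<and> (\<forall>g\<in>set fs. in_span w p g)}" for c v
    proof -
      obtain fs where fs: "v = fock_vec ad vac fs" "length fs = n" "\<forall>g\<in>set fs. in_span w p g"
        using v by blast
      then show ?thesis
        by (simp add: csub_cscale[OF csub_D] fv_D NW_cscale number_fv cscale_cscale mult.commute)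
    qed
  qed
  then show ?thesis by blast
qed

lemma vanish_GS:
  assumes "\<forall>k<p. cinner (J h) (w k) = 0" "x \<in> GS n w p"
  shows "a h x = 0"
proof -
  have fv: "a h (fock_vec ad vac fs) = 0" if "\<forall>g\<in>set fs. in_span w p g" for fs
    using that
  proof (induction fs)
    case Nil then show ?case by (simp add: R(2))
  next
    case (Cons g fs)
    have "cinner (J h) g = cinner (J h) (\<Sum>k<p. cscale (cinner (w k) g) (w k))"
      using Cons.prems by (metis in_span_def list.set_intros(1))
    also have "\<dots> = 0" using assms(1) by (simp add: cinner_sum_right cinner_cscale_right)
    finally have "cinner (J h) g = 0" .
    then show ?case using ccr'[OF fv_D, of h g fs] Cons by simp
  qed
  have "a h x \<in> {0}"
  proof (rule c_span_map[OF R(4) csub_D])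
    show "{fock_vec ad vac fs |fs. length fs = n \<and> (\<forall>g\<in>set fs. in_span w p g)} \<subseteq> D" using fv_D by blast
    show "a h y \<in> {0}" if "y \<in> {fock_vec ad vac fs |fs. length fs = n \<and> (\<forall>g\<in>set fs. in_span w p g)}" for y
      using that fv by blast
    show "csub {0::'f}" by (simp add: csub_def)
    show "x \<in> c_span {fock_vec ad vac fs |fs. length fs = n \<and> (\<forall>g\<in>set fs. in_span w p g)}"
      using assms(2) by (simp add: GS_def)
  qed
  then show ?thesis by simp
qed

end


context fock begin

lemma J_diff: "J (x - y) = J x - J y" by (metis J_add diff_add_cancel eq_diff_eq)
lemma J_sum: "J (sum f A) = (\<Sum>i\<in>A. J (f i))"
proof (induction A rule: infinite_finite_induct)
  case (infinite A) then show ?case using J_diff[of 0 0] by simp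
next
  case empty then show ?case using J_diff[of 0 0] by simp
next
  case (insert x F) then show ?case by (simp add: J_add)
qed

lemma GS_exists:
  assumes "\<Psi> \<in> S n" shows "\<exists>p w. orthonormal w {..<p} \<and> \<Psi> \<in> GS n w p"
proof -
  obtain k c v where kv: "\<forall>i<(k::nat). v i \<in> {fock_vec ad vac fs | fs. length fs = n}"
    "\<Psi> = (\<Sum>i<k. cscale (c i) (v i))"
    using assms unfolding S_def c_span_def by auto
  have "\<forall>i. \<exists>fs. i < k \<longrightarrow> v i = fock_vec ad vac fs \<and> length fs = n" using kv(1) by blast
  then obtain gs where gs: "\<And>i. i < k \<Longrightarrow> v i = fock_vec ad vac (gs i) \<and> length (gs i) = n"
    by metis
  define G where "G = concat (map gs [0..<k])"
  obtain p w where on: "orthonormal w {..<p}"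
    and sp: "\<forall>g\<in>set G. g = (\<Sum>i<p. cscale (cinner (w i) g) (w i))"
    using gram_schmidt[of G] by blast
  have "\<forall>i<k. v i \<in> {fock_vec ad vac fs | fs. length fs = n \<and> (\<forall>g\<in>set fs. in_span w p g)}"
  proof (intro allI impI)
    fix i assume i: "i < k"
    have "\<forall>g\<in>set (gs i). in_span w p g"
      using sp i unfolding in_span_def G_def by auto
    then show "v i \<in> {fock_vec ad vac fs | fs. length fs = n \<and> (\<forall>g\<in>set fs. in_span w p g)}"
      using gs[OF i] by blast
  qed
  then have "\<Psi> \<in> GS n w p" unfolding GS_def kv(2) by (rule c_span_lin)
  then show ?thesis using on by blast
qed

lemma core_S:
  assumes \<Psi>: "\<Psi> \<in> S n" and T: "finite T"
    and hyp: "\<And>\<xi>. (\<Sum>j\<in>T. (cmod (cinner \<xi> (h j)))\<^sup>2) \<le> lam * (norm \<xi>)\<^sup>2"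
  shows "(\<Sum>j\<in>T. (norm (a (h j) \<Psi>))\<^sup>2) \<le> lam * (real n * (norm \<Psi>)\<^sup>2)"
proof -
  obtain p w where on: "orthonormal w {..<p}" and \<Psi>G: "\<Psi> \<in> GS n w p"
    using GS_exists[OF \<Psi>] by blast
  have \<Psi>D: "\<Psi> \<in> D" using \<Psi>G GS_D by blast
  define y where "y k = a (J (w k)) \<Psi>" for k
  have yD: "y k \<in> D" for k using a_D[OF \<Psi>D] by (simp add: y_def)
  have "(\<Sum>k<p. cinner (y k) (y k)) = cinner \<Psi> (NW w p \<Psi>)"
    unfolding cinner_sum_right
  proof (intro sum.cong refl)
    fix k show "cinner (y k) (y k) = cinner \<Psi> (ad (w k) (a (J (w k)) \<Psi>))"
      using adj_D[OF \<Psi>D yD, of "w k" k] by (simp add: y_def)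
  qed
  also have "\<dots> = complex_of_real (real n * (norm \<Psi>)\<^sup>2)"
    by (simp add: number_GS[OF \<Psi>G] cinner_cscale_right cinner_self)
  finally have numb: "(\<Sum>k<p. (norm (y k))\<^sup>2) = real n * (norm \<Psi>)\<^sup>2"
    unfolding cinner_self of_real_sum[symmetric] of_real_eq_iff .
  have dec: "a h \<Psi> = (\<Sum>k<p. cscale (cinner (J (w k)) h) (y k))" for h
  proof -
    define r where "r = h - (\<Sum>k<p. cscale (cinner (J (w k)) h) (J (w k)))"
    have "cinner (J r) (w l) = 0" if l: "l < p" for l
    proof -
      have "J r = J h - (\<Sum>k<p. cscale (cnj (cinner (J (w k)) h)) (w k))"
        by (simp add: r_def J_diff J_sum J_cscale)
      then have "cinner (J r) (w l) = cinner (J h) (w l) - (\<Sum>k<p. cinner (J (w k)) h * cinner (w k) (w l))"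
        by (simp add: cinner_diff_left cinner_sum_left cinner_cscale_left)
      also have "(\<Sum>k<p. cinner (J (w k)) h * cinner (w k) (w l)) = (\<Sum>k<p. if k = l then cinner (J (w k)) h else 0)"
        using on l by (intro sum.cong refl) (simp add: orthonormal_def)
      also have "\<dots> = cinner (J (w l)) h" using l by simp
      also have "cinner (J h) (w l) = cinner (J (w l)) h" using J_cinner[of h "J (w l)"] by simp
      finally show ?thesis by simp
    qed
    then have ar: "a r \<Psi> = 0" using vanish_GS[OF _ \<Psi>G] by blast
    have "h = r + (\<Sum>k<p. cscale (cinner (J (w k)) h) (J (w k)))" by (simp add: r_def)
    then have "a h \<Psi> = a r \<Psi> + (\<Sum>k<p. a (cscale (cinner (J (w k)) h) (J (w k))) \<Psi>)"
      by (metis R(6)[OF \<Psi>D] a_sum_f[OF \<Psi>D])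
    then show ?thesis using ar by (simp add: R(8)[OF \<Psi>D] y_def)
  qed
  obtain q z where onz: "orthonormal z {..<q}"
    and spz: "\<forall>u\<in>set (map y [0..<p]). u = (\<Sum>m<q. cscale (cinner (z m) u) (z m))"
    using gram_schmidt[of "map y [0..<p]"] by blast
  define \<beta> where "\<beta> m k = cinner (z m) (y k)" for m k
  have yexp: "y k = (\<Sum>m<q. cscale (\<beta> m k) (z m))" if "k < p" for k
    using spz that by (auto simp: \<beta>_def)
  define \<xi> where "\<xi> m = (\<Sum>k<p. cscale (cnj (\<beta> m k)) (J (w k)))" for m
  have exp: "a h \<Psi> = (\<Sum>m<q. cscale (cinner (\<xi> m) h) (z m))" for h
  proof -
    have "a h \<Psi> = (\<Sum>k<p. cscale (cinner (J (w k)) h) (\<Sum>m<q. cscale (\<beta> m k) (z m)))"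
      unfolding dec by (intro sum.cong refl) (simp add: yexp)
    also have "\<dots> = (\<Sum>k<p. \<Sum>m<q. cscale (cinner (J (w k)) h * \<beta> m k) (z m))"
      by (simp add: cscale_sum_right cscale_cscale)
    also have "\<dots> = (\<Sum>m<q. \<Sum>k<p. cscale (cinner (J (w k)) h * \<beta> m k) (z m))"
      by (rule sum.swap)
    also have "\<dots> = (\<Sum>m<q. cscale (cinner (\<xi> m) h) (z m))"
      by (intro sum.cong refl) (simp add: \<xi>_def cscale_sum_left cinner_sum_left cinner_cscale_left mult.commute)
    finally show ?thesis .
  qed
  have nh: "(norm (a h \<Psi>))\<^sup>2 = (\<Sum>m<q. (cmod (cinner (\<xi> m) h))\<^sup>2)" for h
    unfolding exp by (rule on_norm[OF onz]) simp
  have Jon: "orthonormal (\<lambda>k. J (w k)) {..<p}"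
    using on unfolding orthonormal_def by (simp add: J_cinner eq_commute)
  have n\<xi>: "(norm (\<xi> m))\<^sup>2 = (\<Sum>k<p. (cmod (\<beta> m k))\<^sup>2)" for m
    unfolding \<xi>_def using on_norm[OF Jon, of "\<lambda>k. cnj (\<beta> m k)"] by simp
  have ny: "(norm (y k))\<^sup>2 = (\<Sum>m<q. (cmod (\<beta> m k))\<^sup>2)" if "k < p" for k
    using on_norm[OF onz, of "\<lambda>m. \<beta> m k"] yexp[OF that] by simp
  have "(\<Sum>j\<in>T. (norm (a (h j) \<Psi>))\<^sup>2) = (\<Sum>j\<in>T. \<Sum>m<q. (cmod (cinner (\<xi> m) (h j)))\<^sup>2)"
    by (simp add: nh)
  also have "\<dots> = (\<Sum>m<q. \<Sum>j\<in>T. (cmod (cinner (\<xi> m) (h j)))\<^sup>2)" by (rule sum.swap)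
  also have "\<dots> \<le> (\<Sum>m<q. lam * (norm (\<xi> m))\<^sup>2)" by (intro sum_mono hyp)
  also have "\<dots> = lam * (\<Sum>m<q. \<Sum>k<p. (cmod (\<beta> m k))\<^sup>2)" by (simp add: n\<xi> sum_distrib_left)
  also have "(\<Sum>m<q. \<Sum>k<p. (cmod (\<beta> m k))\<^sup>2) = (\<Sum>k<p. \<Sum>m<q. (cmod (\<beta> m k))\<^sup>2)" by (rule sum.swap)
  also have "\<dots> = (\<Sum>k<p. (norm (y k))\<^sup>2)" by (intro sum.cong refl) (simp add: ny)
  also have "\<dots> = real n * (norm \<Psi>)\<^sup>2" by (rule numb)
  finally show ?thesis .
qed

end


lemma pythag:
  fixes v :: "nat \<Rightarrow> 'a::complex_inner"
  assumes "finite I" "\<And>i j. i \<in> I \<Longrightarrow> j \<in> I \<Longrightarrow> i \<noteq> j \<Longrightarrow> cinner (v i) (v j) = 0"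
  shows "(norm (sum v I))\<^sup>2 = (\<Sum>i\<in>I. (norm (v i))\<^sup>2)"
proof -
  have "cinner (sum v I) (sum v I) = (\<Sum>i\<in>I. \<Sum>j\<in>I. cinner (v i) (v j))"
    unfolding cinner_sum_left cinner_sum_right by (rule sum.swap)
  also have "\<dots> = (\<Sum>i\<in>I. cinner (v i) (v i))"
  proof (intro sum.cong refl)
    fix i assume i: "i \<in> I"
    have "(\<Sum>j\<in>I. cinner (v i) (v j)) = (\<Sum>j\<in>I. if j = i then cinner (v i) (v i) else 0)"
      using assms(2) i by (intro sum.cong refl) auto
    also have "\<dots> = cinner (v i) (v i)" using i assms(1) by simp
    finally show "(\<Sum>j\<in>I. cinner (v i) (v j)) = cinner (v i) (v i)" .
  qed
  finally show ?thesis unfolding cinner_self of_real_sum[symmetric] of_real_eq_iff .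
qed

context fock begin

lemma core_V:
  assumes \<Psi>: "\<Psi> \<in> V n" and T: "finite T"
    and hyp: "\<And>\<xi>. (\<Sum>j\<in>T. (cmod (cinner \<xi> (h j)))\<^sup>2) \<le> lam * (norm \<xi>)\<^sup>2"
  shows "(\<Sum>j\<in>T. (norm (a (h j) \<Psi>))\<^sup>2) \<le> lam * (real n * (norm \<Psi>)\<^sup>2)"
proof -
  obtain s where s: "\<And>k. s k \<in> S n" "s \<longlonglongrightarrow> \<Psi>" using \<Psi> V_S closure_sequential by metis
  have sV: "\<And>k. s k \<in> V n" using s(1) S_V by blast
  have L: "(\<lambda>k. (\<Sum>j\<in>T. (norm (a (h j) (s k)))\<^sup>2)) \<longlonglongrightarrow> (\<Sum>j\<in>T. (norm (a (h j) \<Psi>))\<^sup>2)"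
    by (intro tendsto_sum tendsto_power tendsto_norm seq_a[OF sV \<Psi> s(2)])
  have Rt: "(\<lambda>k. lam * (real n * (norm (s k))\<^sup>2)) \<longlonglongrightarrow> lam * (real n * (norm \<Psi>)\<^sup>2)"
    by (intro tendsto_intros s(2))
  have E: "\<forall>\<^sub>F k in sequentially. (\<Sum>j\<in>T. (norm (a (h j) (s k)))\<^sup>2) \<le> lam * (real n * (norm (s k))\<^sup>2)"
    by (intro always_eventually allI core_S[OF s(1) T hyp])
  show ?thesis by (rule tendsto_le[OF trivial_limit_sequentially Rt L E])
qed

lemma single_bound:
  assumes "\<Psi> \<in> V n"
  shows "(norm (a h \<Psi>))\<^sup>2 \<le> (norm h)\<^sup>2 * (real n * (norm \<Psi>)\<^sup>2)"
proof -
  have "(\<Sum>j\<in>{0::nat}. (cmod (cinner \<xi> h))\<^sup>2) \<le> (norm h)\<^sup>2 * (norm \<xi>)\<^sup>2" for \<xi>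
    using cauchy_schwarz[of \<xi> h] by (simp add: power_mono power_mult_distrib[symmetric] mult.commute)
  from core_V[OF assms, of "{0::nat}" "\<lambda>_. h", OF _ this] show ?thesis by simp
qed

end


lemma sums_of_real_extract:
  assumes "(\<lambda>n. complex_of_real (g n)) sums c"
  shows "summable g" "c = complex_of_real (suminf g)"
proof -
  have "summable (\<lambda>n. complex_of_real (g n))" using assms by (rule sums_summable)
  then show sg: "summable g" by (simp add: summable_of_real_iff)
  have "(\<lambda>n. complex_of_real (g n)) sums complex_of_real (suminf g)"
    using sg by (simp add: sums_of_real_iff summable_sums)
  then show "c = complex_of_real (suminf g)" using assms sums_unique2 by blast
qed

context fock begin

lemma D_alpha_1: "x \<in> D_alpha ad vac 1 \<longleftrightarrow> summable (\<lambda>n. (real n + 1)\<^sup>2 * (norm (comp ad vac n x))\<^sup>2)"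
  unfolding D_alpha_def by simp
lemma D_alpha_half: "x \<in> D_alpha ad vac (1/2) \<longleftrightarrow> summable (\<lambda>n. (real n + 1) * (norm (comp ad vac n x))\<^sup>2)"
  unfolding D_alpha_def by (simp add: powr_one)

lemma D1_half: assumes "x \<in> D_alpha ad vac 1" shows "x \<in> D_alpha ad vac (1/2)"
proof -
  have "summable (\<lambda>n. (real n + 1)\<^sup>2 * (norm (comp ad vac n x))\<^sup>2)" using assms D_alpha_1 by blast
  moreover have "norm ((real n + 1) * (norm (comp ad vac n x))\<^sup>2) \<le> (real n + 1)\<^sup>2 * (norm (comp ad vac n x))\<^sup>2" for n
    by (simp add: power2_eq_square mult_right_mono)
  ultimately show ?thesis unfolding D_alpha_half by (rule summable_comparison_test'[where N=0])
qed

lemma comp_a: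
  assumes "\<Phi> \<in> D_alpha ad vac (1/2)"
  shows "comp ad vac m (a h \<Phi>) = a h (comp ad vac (Suc m) \<Phi>)"
proof (rule comp_eq)
  define y where "y n = a h (comp ad vac n \<Phi>)" for n
  show "a h (comp ad vac (Suc m) \<Phi>) \<in> V m" by (rule a_V[OF comp_in])
  fix z assume z: "z \<in> V m"
  have s: "(\<lambda>n. cinner z (y n)) sums cinner z (a h \<Phi>)"
    unfolding y_def by (rule sums_cinner_right[OF R(16)[OF assms]])
  have "(\<lambda>n. cinner z (y n)) = (\<lambda>n. if n = Suc m then cinner z (y (Suc m)) else 0)"
  proof
    fix n show "cinner z (y n) = (if n = Suc m then cinner z (y (Suc m)) else 0)"
    proof (cases n)
      case 0 then show ?thesis by (simp add: y_def a_V0[OF comp_in])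
    next
      case (Suc k)
      then show ?thesis using V_orth[OF z a_V[OF comp_in[where n="Suc k" and x=\<Phi>], where f=h]] by (auto simp: y_def)
    qed
  qed
  then have "(\<lambda>n. cinner z (y n)) sums cinner z (y (Suc m))" using sums_single[of "Suc m" "\<lambda>_. cinner z (y (Suc m))"]
    by simp
  then have "cinner z (a h \<Phi>) = cinner z (y (Suc m))" using s sums_unique2 by blast
  then show "cinner z (a h \<Phi> - a h (comp ad vac (Suc m) \<Phi>)) = 0" by (simp add: cinner_diff_right y_def)
qed

lemma a_half:
  assumes "\<Phi> \<in> D_alpha ad vac 1"
  shows "a h \<Phi> \<in> D_alpha ad vac (1/2)"
proof -
  define cc where "cc n = (norm (comp ad vac n \<Phi>))\<^sup>2" for n
  have s1: "summable (\<lambda>n. (real n + 1)\<^sup>2 * cc n)" using assms D_alpha_1 cc_def by simp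
  have "summable (\<lambda>m. (norm h)\<^sup>2 * ((real (m + 1) + 1)\<^sup>2 * cc (m + 1)))"
    by (intro summable_mult summable_ignore_initial_segment s1)
  moreover have "norm ((real m + 1) * (norm (comp ad vac m (a h \<Phi>)))\<^sup>2) \<le> (norm h)\<^sup>2 * ((real (m + 1) + 1)\<^sup>2 * cc (m + 1))" for m
  proof -
    have "norm ((real m + 1) * (norm (comp ad vac m (a h \<Phi>)))\<^sup>2) = (real m + 1) * (norm (a h (comp ad vac (Suc m) \<Phi>)))\<^sup>2"
      using comp_a[OF D1_half[OF assms]] by simp
    also have "\<dots> \<le> (real m + 1) * ((norm h)\<^sup>2 * (real (Suc m) * cc (Suc m)))"
    proof (rule mult_left_mono)
      show "(norm (a h (comp ad vac (Suc m) \<Phi>)))\<^sup>2 \<le> (norm h)\<^sup>2 * (real (Suc m) * cc (Suc m))"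
        unfolding cc_def by (rule single_bound[OF comp_in])
    qed simp
    also have "\<dots> \<le> (norm h)\<^sup>2 * ((real (m + 1) + 1)\<^sup>2 * cc (m + 1))"
      by (simp add: cc_def power2_eq_square algebra_simps mult_right_mono mult_left_mono)
    finally show ?thesis .
  qed
  ultimately show ?thesis unfolding D_alpha_half by (rule summable_comparison_test'[where N=0])
qed

lemma term_sums:
  assumes "\<Phi> \<in> D_alpha ad vac 1"
  shows "(\<lambda>m. complex_of_real ((norm (a (J x) (comp ad vac (Suc m) \<Phi>)))\<^sup>2)) sums cinner \<Phi> (ad x (a (J x) \<Phi>))"
proof -
  define \<Psi> where "\<Psi> = a (J x) \<Phi>"
  have \<Psi>: "\<Psi> \<in> D_alpha ad vac (1/2)" using a_half[OF assms] by (simp add: \<Psi>_def)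
  have s: "(\<lambda>m. cinner \<Phi> (ad x (comp ad vac m \<Psi>))) sums cinner \<Phi> (ad x \<Psi>)"
    by (rule sums_cinner_right[OF R(17)[OF \<Psi>]])
  have "cinner \<Phi> (ad x (comp ad vac m \<Psi>)) = complex_of_real ((norm (a (J x) (comp ad vac (Suc m) \<Phi>)))\<^sup>2)" for m
  proof -
    define u where "u = comp ad vac (Suc m) \<Phi>"
    have u: "u \<in> V (Suc m)" by (simp add: u_def comp_in)
    have v: "a (J x) u \<in> V m" by (rule a_V[OF u])
    have "comp ad vac m \<Psi> = a (J x) u" using comp_a[OF D1_half[OF assms]] by (simp add: \<Psi>_def u_def)
    then have "cinner \<Phi> (ad x (comp ad vac m \<Psi>)) = cinner \<Phi> (ad x (a (J x) u))" by simp
    also have "\<dots> = cinner u (ad x (a (J x) u))" using comp_cinner'[OF ad_V[OF v]] by (simp add: u_def)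
    also have "\<dots> = cinner (a (J x) u) (a (J x) u)" by (rule adj_V[OF u v])
    finally show ?thesis by (simp add: cinner_self u_def)
  qed
  then show ?thesis using s by (simp add: \<Psi>_def)
qed

lemma numop_sums:
  assumes "\<Phi> \<in> D_alpha ad vac 1"
  shows "(\<lambda>n. complex_of_real (real n * (norm (comp ad vac n \<Phi>))\<^sup>2)) sums cinner \<Phi> (numop ad vac \<Phi>)"
proof -
  define P where "P n = comp ad vac n \<Phi>" for n
  define cc where "cc n = (norm (P n))\<^sup>2" for n
  have s1: "summable (\<lambda>n. (real n + 1)\<^sup>2 * cc n)" using assms D_alpha_1 cc_def P_def by simp
  have bound: "\<exists>N. \<forall>m\<ge>N. \<forall>n. norm (\<Sum>k\<in>{m..<n}. cscale (of_nat k) (P k)) < e" if e: "e > 0" for e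
  proof -
    have "e\<^sup>2 > 0" using e by simp
    then obtain N where N: "\<And>m n. m \<ge> N \<Longrightarrow> norm (\<Sum>k\<in>{m..<n}. (real k + 1)\<^sup>2 * cc k) < e\<^sup>2"
      using s1[unfolded summable_Cauchy] by blast
    show "\<exists>N. \<forall>m\<ge>N. \<forall>n. norm (\<Sum>k\<in>{m..<n}. cscale (of_nat k) (P k)) < e"
    proof (intro exI allI impI)
      fix m n assume m: "m \<ge> N"
      have "(norm (\<Sum>k\<in>{m..<n}. cscale (of_nat k) (P k)))\<^sup>2 = (\<Sum>k\<in>{m..<n}. (norm (cscale (of_nat k) (P k)))\<^sup>2)"
      proof (rule pythag)
        fix i j :: nat assume "i \<noteq> j"
        then show "cinner (cscale (of_nat i) (P i)) (cscale (of_nat j) (P j)) = 0"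
          using V_orth[OF csub_cscale[OF csub_V comp_in] csub_cscale[OF csub_V comp_in]]
          by (simp add: P_def)
      qed simp
      also have "\<dots> = (\<Sum>k\<in>{m..<n}. (real k)\<^sup>2 * cc k)"
        by (simp add: norm_cscale cc_def power_mult_distrib)
      also have "\<dots> \<le> (\<Sum>k\<in>{m..<n}. (real k + 1)\<^sup>2 * cc k)"
        by (intro sum_mono mult_right_mono power_mono) (auto simp: cc_def)
      also have "\<dots> \<le> norm (\<Sum>k\<in>{m..<n}. (real k + 1)\<^sup>2 * cc k)" by simp
      also have "\<dots> < e\<^sup>2" using N m by blast
      finally show "norm (\<Sum>k\<in>{m..<n}. cscale (of_nat k) (P k)) < e"
        using e by (simp add: power_less_imp_less_base)
    qed
  qed
  have summ: "summable (\<lambda>n. cscale (of_nat n) (P n))"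
    unfolding summable_iff_convergent Cauchy_convergent_iff[symmetric]
  proof (rule metric_CauchyI)
    fix e :: real assume "e > 0"
    then obtain N where N: "\<And>m n. m \<ge> N \<Longrightarrow> norm (\<Sum>k\<in>{m..<n}. cscale (of_nat k) (P k)) < e"
      using bound by blast
    have d: "dist (\<Sum>i<m. cscale (of_nat i) (P i)) (\<Sum>i<n. cscale (of_nat i) (P i)) < e"
      if "m \<ge> N" "n \<ge> N" "m \<le> n" for m n
    proof -
      have "(\<Sum>i<n. cscale (of_nat i) (P i)) = (\<Sum>i<m. cscale (of_nat i) (P i)) + (\<Sum>i\<in>{m..<n}. cscale (of_nat i) (P i))"
        using sum.atLeastLessThan_concat[of 0 m n "\<lambda>i. cscale (of_nat i) (P i)"] that
        by (simp add: atLeast0LessThan)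
      then show ?thesis using N[OF that(1), of n] by (simp add: dist_norm norm_minus_commute)
    qed
    show "\<exists>M. \<forall>m\<ge>M. \<forall>n\<ge>M. dist (\<Sum>i<m. cscale (of_nat i) (P i)) (\<Sum>i<n. cscale (of_nat i) (P i)) < e"
      by (metis d dist_commute nle_le)
  qed
  have "(\<lambda>n. cinner \<Phi> (cscale (of_nat n) (P n))) sums cinner \<Phi> (numop ad vac \<Phi>)"
    unfolding numop_def P_def[symmetric] by (rule sums_cinner_right[OF summable_sums[OF summ]])
  moreover have "cinner \<Phi> (cscale (of_nat n) (P n)) = complex_of_real (real n * (norm (comp ad vac n \<Phi>))\<^sup>2)" for n
    using comp_cinner'[OF comp_in[where n=n and x=\<Phi>], where x=\<Phi>] by (simp add: cinner_cscale_right P_def cinner_self)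
  ultimately show ?thesis by simp
qed

end


lemma bcl_bounded_linear:
  assumes "bounded_clinear_op A" shows "bounded_linear A"
proof -
  obtain K where K: "\<And>x. norm (A x) \<le> K * norm x" using assms unfolding bounded_clinear_op_def by blast
  have cl: "clinear_on UNIV A" using assms unfolding bounded_clinear_op_def by blast
  show ?thesis
  proof (rule bounded_linear_intro[where K=K])
    show "A (x + y) = A x + A y" for x y using cl by (simp add: clinear_on_def)
    show "A (scaleR r x) = scaleR r (A x)" for r x using cl by (simp add: clinear_on_def scaleR_cscale)
    show "norm (A x) \<le> norm x * K" for x using K[of x] by (simp add: mult.commute)
  qed
qed

context fock begin

lemma bessel_A:
  fixes A :: "'l \<Rightarrow> 'l" and e :: "nat \<Rightarrow> 'l"
  assumes A: "bounded_clinear_op A" and e: "complete_ons e"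
  shows "(\<Sum>j=1..M. (cmod (cinner \<xi> (J (A (e j)))))\<^sup>2) \<le> (onorm A)\<^sup>2 * (norm \<xi>)\<^sup>2"
proof -
  have bl: "bounded_linear A" by (rule bcl_bounded_linear[OF A])
  have cl: "clinear_on UNIV A" using A unfolding bounded_clinear_op_def by blast
  have csU: "csub (UNIV :: 'l set)" by (simp add: csub_def)
  have eon: "orthonormal e {1..M}" using e unfolding complete_ons_def orthonormal_def by simp
  define \<eta> where "\<eta> = J \<xi>"
  define t where "t j = cinner (A (e j)) \<eta>" for j
  have tj: "cinner \<xi> (J (A (e j))) = t j" for j
    using J_cinner[of "J \<xi>" "A (e j)"] by (simp add: t_def \<eta>_def)
  define S where "S = (\<Sum>j=1..M. (cmod (t j))\<^sup>2)"
  define u where "u = (\<Sum>j=1..M. cscale (t j) (e j))"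
  have Au: "A u = (\<Sum>j=1..M. cscale (t j) (A (e j)))"
    unfolding u_def by (simp add: clinear_on_sum[OF cl csU] clinear_on_cscale[OF cl])
  have "cinner (A u) \<eta> = (\<Sum>j=1..M. cnj (t j) * t j)"
    unfolding Au by (simp add: cinner_sum_left cinner_cscale_left t_def)
  also have "\<dots> = complex_of_real S"
    unfolding S_def of_real_sum by (intro sum.cong refl) (metis complex_norm_square mult.commute of_real_power)
  finally have cA: "cinner (A u) \<eta> = complex_of_real S" .
  have S0: "S \<ge> 0" by (simp add: S_def sum_nonneg)
  have nu: "(norm u)\<^sup>2 = S" unfolding u_def S_def by (rule on_norm[OF eon]) simp
  have "S = cmod (cinner (A u) \<eta>)" using cA S0 by simp
  also have "\<dots> \<le> norm (A u) * norm \<eta>" by (rule cauchy_schwarz)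
  also have "\<dots> \<le> onorm A * norm u * norm \<xi>"
  proof -
    have "norm \<eta> = norm \<xi>" by (simp add: \<eta>_def)
    then show ?thesis using mult_right_mono[OF onorm[OF bl, of u], of "norm \<xi>"] by simp
  qed
  also have "\<dots> = onorm A * norm \<xi> * sqrt S"
  proof -
    have nus: "norm u = sqrt S" using nu by (metis norm_ge_zero real_sqrt_unique)
    show ?thesis by (simp only: nus mult_ac)
  qed
  finally have S1: "S \<le> onorm A * norm \<xi> * sqrt S" .
  have o0: "onorm A * norm \<xi> \<ge> 0" using onorm_pos_le[OF bl] by simp
  have "S \<le> (onorm A * norm \<xi>)\<^sup>2"
  proof (cases "S = 0")
    case True then show ?thesis by simp
  next
    case False
    then have sp: "sqrt S > 0" using S0 by simp
    have 1: "sqrt S * sqrt S \<le> (onorm A * norm \<xi>) * sqrt S"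
      using S1 S0 real_sqrt_mult_self[of S] by simp
    have "sqrt S \<le> onorm A * norm \<xi>" by (rule mult_right_le_imp_le[OF 1 sp])
    then have "(sqrt S)\<^sup>2 \<le> (onorm A * norm \<xi>)\<^sup>2" using sp by (intro power_mono) auto
    then show ?thesis using S0 by simp
  qed
  then show ?thesis by (simp add: tj S_def power_mult_distrib)
qed

lemma main:
  fixes A :: "'l \<Rightarrow> 'l" and e :: "nat \<Rightarrow> 'l"
  assumes A: "bounded_clinear_op A" and e: "complete_ons e" and \<Phi>: "\<Phi> \<in> D_alpha ad vac 1"
  shows "(\<Sum>j=1..M. cinner \<Phi> (ad (A (e j)) (a ((\<lambda>x. J (A (J x))) (J (e j))) \<Phi>)))
           \<le> complex_of_real ((onorm A)\<^sup>2) * cinner \<Phi> (numop ad vac \<Phi>)"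
proof -
  define cc where "cc n = (norm (comp ad vac n \<Phi>))\<^sup>2" for n
  define g where "g j m = (norm (a (J (A (e j))) (comp ad vac (Suc m) \<Phi>)))\<^sup>2" for j m
  have ts: "(\<lambda>m. complex_of_real (g j m)) sums cinner \<Phi> (ad (A (e j)) (a (J (A (e j))) \<Phi>))" for j
    unfolding g_def by (rule term_sums[OF \<Phi>])
  have gs: "summable (g j)" for j using sums_of_real_extract(1)[OF ts] .
  have gv: "cinner \<Phi> (ad (A (e j)) (a (J (A (e j))) \<Phi>)) = complex_of_real (suminf (g j))" for j
    using sums_of_real_extract(2)[OF ts] .
  have L: "(\<Sum>j=1..M. cinner \<Phi> (ad (A (e j)) (a ((\<lambda>x. J (A (J x))) (J (e j))) \<Phi>)))
      = complex_of_real (\<Sum>n. \<Sum>j=1..M. g j n)"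
    by (simp add: gv suminf_sum[OF gs])
  have ns: "(\<lambda>n. complex_of_real (real n * cc n)) sums cinner \<Phi> (numop ad vac \<Phi>)"
    unfolding cc_def by (rule numop_sums[OF \<Phi>])
  have rs: "summable (\<lambda>n. real n * cc n)" using sums_of_real_extract(1)[OF ns] .
  have rv: "cinner \<Phi> (numop ad vac \<Phi>) = complex_of_real (\<Sum>n. real n * cc n)"
    using sums_of_real_extract(2)[OF ns] .
  have shift: "(\<Sum>n. real n * cc n) = (\<Sum>m. real (Suc m) * cc (Suc m))"
    using suminf_split_head[OF rs] by simp
  have rs': "summable (\<lambda>m. (onorm A)\<^sup>2 * (real (Suc m) * cc (Suc m)))"
    using summable_mult[OF summable_ignore_initial_segment[OF rs, of 1]] by simp
  have le: "(\<Sum>j=1..M. g j m) \<le> (onorm A)\<^sup>2 * (real (Suc m) * cc (Suc m))" for m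
    unfolding g_def cc_def
    by (rule core_V[OF comp_in finite_atLeastAtMost bessel_A[OF A e]])
  have "(\<Sum>n. \<Sum>j=1..M. g j n) \<le> (\<Sum>m. (onorm A)\<^sup>2 * (real (Suc m) * cc (Suc m)))"
    by (rule suminf_le[OF le summable_sum[OF gs] rs'])
  also have "\<dots> = (onorm A)\<^sup>2 * (\<Sum>n. real n * cc n)"
  proof -
    have rs1: "summable (\<lambda>m. real (Suc m) * cc (Suc m))"
      using summable_ignore_initial_segment[OF rs, of 1] by (simp only: Suc_eq_plus1)
    show ?thesis unfolding shift by (rule suminf_mult[OF rs1])
  qed
  finally have "(\<Sum>n. \<Sum>j=1..M. g j n) \<le> (onorm A)\<^sup>2 * (\<Sum>n. real n * cc n)" .
  then show ?thesis unfolding L rv by (simp add: less_eq_complex_def)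
qed

end

theorem lemma4p5:
  fixes J :: "'l::{complex_inner,complete_space} \<Rightarrow> 'l"
    and A :: "'l \<Rightarrow> 'l"
    and e :: "nat \<Rightarrow> 'l"
    and a ad :: "'l \<Rightarrow> 'f::{complex_inner,complete_space} \<Rightarrow> 'f"
    and vac :: 'f
    and M :: nat
    and \<Phi> :: 'f
  assumes "conjugation J"
    and "fock_rep J a ad vac"
    and "bounded_clinear_op A"
    and "complete_ons e"
    and "\<Phi> \<in> D_alpha ad vac 1"
  shows "(\<Sum>j=1..M. cinner \<Phi> (ad (A (e j)) (a ((\<lambda>x. J (A (J x))) (J (e j))) \<Phi>)))
           \<le> complex_of_real ((onorm A)\<^sup>2) * cinner \<Phi> (numop ad vac \<Phi>)"
proof -
  interpret fock J a ad vac using assms(1,2) by unfold_locales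
  show ?thesis by (rule main[OF assms(3,4,5)])
qed


end
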